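(* Let $\mathcal H$ be a family of graphs. The following are equivalent: (i) there is a constant $c=c(\mathcal H)$ such that every connected $\mathcal H$-free graph $G$ has fewer than $c$ vertices $v$ for which $G[N(v)]$ has at least $2$ connected components; (ii) there is a positive integer $n$ such that $\mathcal H\le \{K_n^*,\ K_{1,n}^*,\ P_n,\ K_{2,n},\ CK_n,\ T_n\}$.
   Context: All graphs are finite, simple, undirected. For graphs $H_1,H_2$, write $H_1\prec H_2$ if $H_2$ contains an induced subgraph isomorphic to $H_1$. A graph $G$ is $\mathcal H$-free if no $H\in\mathcal H$ satisfies $H\prec G$. For families $\mathcal H_1,\mathcal H_2$, write $\mathcal H_1\le\mathcal H_2$ if for every $H_2\in\mathcal H_2$ there is $H_1\in\mathcal H_1$ with $H_1\prec H_2$. $N(v)$ is the neighborhood of $v$ and $G[S]$ the induced subgraph. $K_n$, $E_n$, $P_n$ are the complete graph, edgeless graph, and path on $n$ vertices; $K_{s,t}$ is the complete bipartite graph; $G_1+G_2$ is the join (disjoint union plus all edges between $V(G_1)$ and $V(G_2)$). $K_{1,n}^*$ is obtained from the star $K_{1,n}$ by attaching a new pendant vertex to each leaf; $K_n^*$ is obtained from $K_n$ by attaching a new pendant vertex to each vertex; $CK_n$ is obtained from two disjoint copies of $K_n$ by adding a perfect matching between them; $T_n$ is obtained from the join $K_n+E_n$ by adding one new vertex adjacent to exactly the $n$ vertices of $E_n$. *)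

theory Defs
  imports Main
begin

type_synonym graph = "nat set \<times> (nat \<Rightarrow> nat \<Rightarrow> bool)"

definition verts :: "graph \<Rightarrow> nat set" where "verts G = fst G"
definition adj :: "graph \<Rightarrow> nat \<Rightarrow> nat \<Rightarrow> bool" where "adj G = snd G"

definition is_graph :: "graph \<Rightarrow> bool" where
  "is_graph G \<longleftrightarrow> finite (verts G)
     \<and> (\<forall>u v. adj G u v \<longrightarrow> adj G v u)
     \<and> (\<forall>u. \<not> adj G u u)
     \<and> (\<forall>u v. adj G u v \<longrightarrow> u \<in> verts G \<and> v \<in> verts G)"

definition induced_sub :: "graph \<Rightarrow> graph \<Rightarrow> bool" (infix "\<prec>" 50) where
  "H \<prec> G \<longleftrightarrow> (\<exists>f. inj_on f (verts H) \<and> f ` verts H \<subseteq> verts G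
     \<and> (\<forall>u\<in>verts H. \<forall>v\<in>verts H. adj H u v \<longleftrightarrow> adj G (f u) (f v)))"

definition H_free :: "graph set \<Rightarrow> graph \<Rightarrow> bool" where
  "H_free \<H> G \<longleftrightarrow> (\<forall>H\<in>\<H>. \<not> H \<prec> G)"

definition family_le :: "graph set \<Rightarrow> graph set \<Rightarrow> bool" where
  "family_le \<H>1 \<H>2 \<longleftrightarrow> (\<forall>H2\<in>\<H>2. \<exists>H1\<in>\<H>1. H1 \<prec> H2)"

definition reach_in :: "graph \<Rightarrow> nat set \<Rightarrow> nat \<Rightarrow> nat \<Rightarrow> bool" where
  "reach_in G S x y \<longleftrightarrow> x \<in> S \<and> y \<in> S \<and>
     (\<lambda>a b. a \<in> S \<and> b \<in> S \<and> adj G a b)\<^sup>*\<^sup>* x y"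

definition components :: "graph \<Rightarrow> nat set \<Rightarrow> nat set set" where
  "components G S = (\<lambda>x. {y \<in> S. reach_in G S x y}) ` S"

definition connected_graph :: "graph \<Rightarrow> bool" where
  "connected_graph G \<longleftrightarrow> (\<forall>x\<in>verts G. \<forall>y\<in>verts G. reach_in G (verts G) x y)"

definition nbhd :: "graph \<Rightarrow> nat \<Rightarrow> nat set" where
  "nbhd G v = {u \<in> verts G. adj G v u}"

definition bad_verts :: "graph \<Rightarrow> nat set" where
  "bad_verts G = {v \<in> verts G. card (components G (nbhd G v)) \<ge> 2}"

(* K_n^*: clique on 0..n-1, pendant i+n attached to i *)
definition Kstar :: "nat \<Rightarrow> graph" where
  "Kstar n = ({0..<2*n}, \<lambda>u v. (u < n \<and> v < n \<and> u \<noteq> v)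
      \<or> (u < n \<and> v = u + n) \<or> (v < n \<and> u = v + n))"

(* K_{1,n}^*: centre 0, leaves 1..n, pendant i+n attached to leaf i *)
definition K1nstar :: "nat \<Rightarrow> graph" where
  "K1nstar n = ({0..2*n}, \<lambda>u v. (u = 0 \<and> 1 \<le> v \<and> v \<le> n) \<or> (v = 0 \<and> 1 \<le> u \<and> u \<le> n)
      \<or> (1 \<le> u \<and> u \<le> n \<and> v = u + n) \<or> (1 \<le> v \<and> v \<le> n \<and> u = v + n))"

definition Path :: "nat \<Rightarrow> graph" where
  "Path n = ({0..<n}, \<lambda>u v. u < n \<and> v < n \<and> (v = u + 1 \<or> u = v + 1))"

definition K2n :: "nat \<Rightarrow> graph" where
  "K2n n = ({0..<n+2}, \<lambda>u v. (u < 2 \<and> 2 \<le> v \<and> v < n + 2) \<or> (v < 2 \<and> 2 \<le> u \<and> u < n + 2))"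

(* CK_n: cliques on 0..n-1 and n..2n-1, matching i -- i+n *)
definition CK :: "nat \<Rightarrow> graph" where
  "CK n = ({0..<2*n}, \<lambda>u v. (u < n \<and> v < n \<and> u \<noteq> v)
      \<or> (n \<le> u \<and> u < 2*n \<and> n \<le> v \<and> v < 2*n \<and> u \<noteq> v)
      \<or> (u < n \<and> v = u + n) \<or> (v < n \<and> u = v + n))"

(* T_n: K_n on 0..n-1 joined to E_n on n..2n-1, plus vertex 2n adjacent to n..2n-1 *)
definition Tgraph :: "nat \<Rightarrow> graph" where
  "Tgraph n = ({0..2*n}, \<lambda>u v. (u < n \<and> v < n \<and> u \<noteq> v)
      \<or> (u < n \<and> n \<le> v \<and> v < 2*n) \<or> (v < n \<and> n \<le> u \<and> u < 2*n)
      \<or> (u = 2*n \<and> n \<le> v \<and> v < 2*n) \<or> (v = 2*n \<and> n \<le> u \<and> u < 2*n))"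

end

theory Submission
  imports Defs "HOL-Library.Ramsey"
begin

lemma ramsey_seq:
  fixes k m :: nat
  assumes "k > 0"
  shows "\<exists>N. \<forall>f::nat\<Rightarrow>nat\<Rightarrow>nat. (\<forall>i j. i<j \<longrightarrow> j<N \<longrightarrow> f i j < k) \<longrightarrow>
     (\<exists>h c. (\<forall>i<m. h i < N) \<and> (\<forall>i j. i<j \<longrightarrow> j<m \<longrightarrow> h i < h j)
        \<and> (\<forall>i j. i<j \<longrightarrow> j<m \<longrightarrow> f (h i) (h j) = c))"
proof -
  obtain N :: nat where N: "partn_lst {..<N} (replicate k m) 2" using ramsey_full[of "replicate k m" 2] by blast
  show ?thesis
  proof (rule exI[of _ N], intro allI impI)
    fix f :: "nat\<Rightarrow>nat\<Rightarrow>nat"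
    assume f: "\<forall>i j. i<j \<longrightarrow> j<N \<longrightarrow> f i j < k"
    define g where "g e = f (Min e) (Max e)" for e :: "nat set"
    have g: "g \<in> nsets {..<N} 2 \<rightarrow> {..<k}"
    proof
      fix e assume "e \<in> nsets {..<N} 2"
      then obtain a b where e: "e = {a,b}" "a \<noteq> b" "a < N" "b < N"
        unfolding nsets_def card_2_iff by auto
      have "min a b < max a b" "max a b < N" using e by auto
      then have "f (min a b) (max a b) < k" using f by blast
      then show "g e \<in> {..<k}" using e by (simp add: g_def)
    qed
    obtain i H where i: "i < length (replicate k m)" and H: "H \<in> nsets {..<N} (replicate k m ! i)"
      and hom: "g ` nsets H 2 \<subseteq> {i}"
      using partn_lstE[OF N g] by (metis length_replicate)
    have Hm: "H \<subseteq> {..<N}" "finite H" "card H = m" using H i by (auto simp: nsets_def)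
    define xs where "xs = sorted_list_of_set H"
    have xs: "set xs = H" "length xs = m" "sorted_wrt (<) xs"
      using Hm by (auto simp: xs_def)
    show "\<exists>h c. (\<forall>i<m. h i < N) \<and> (\<forall>i j. i<j \<longrightarrow> j<m \<longrightarrow> h i < h j)
        \<and> (\<forall>i j. i<j \<longrightarrow> j<m \<longrightarrow> f (h i) (h j) = c)"
    proof (rule exI[of _ "\<lambda>j. xs ! j"], rule exI[of _ i], intro conjI allI impI)
      fix j assume j: "j < m"
      then have "xs ! j \<in> H" using xs(1,2) nth_mem by metis
      then show "xs ! j < N" using Hm(1) by auto
    next
      fix a b assume "a < b" "b < m" then show "xs ! a < xs ! b"
        using xs(2,3) sorted_wrt_nth_less by metis
    next
      fix a b assume ab: "a < b" "b < m"
      then have lt: "xs ! a < xs ! b" using xs(2,3) sorted_wrt_nth_less by metis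
      have "xs ! a \<in> H" "xs ! b \<in> H" using ab xs(1,2) nth_mem by (metis less_trans)+
      then have "{xs!a, xs!b} \<in> nsets H 2" using lt by (simp add: nsets_def)
      then have "g {xs!a, xs!b} = i" using hom by blast
      then show "f (xs ! a) (xs ! b) = i" using lt by (simp add: g_def)
    qed
  qed
qed

lemma gE:
  assumes "is_graph G"
  shows "finite (verts G)" "adj G u v \<Longrightarrow> adj G v u" "\<not> adj G u u"
    "adj G u v \<Longrightarrow> u \<in> verts G" "adj G u v \<Longrightarrow> v \<in> verts G"
  using assms unfolding is_graph_def by blast+

lemma adj_neq: "is_graph G \<Longrightarrow> adj G u v \<Longrightarrow> u \<noteq> v"
  using gE(3) by blast

lemma reach_refl: "x \<in> S \<Longrightarrow> reach_in G S x x"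
  by (simp add: reach_in_def)

lemma reach_adj: "x \<in> S \<Longrightarrow> y \<in> S \<Longrightarrow> adj G x y \<Longrightarrow> reach_in G S x y"
  by (auto simp: reach_in_def)

lemma reach_trans: "reach_in G S x y \<Longrightarrow> reach_in G S y z \<Longrightarrow> reach_in G S x z"
  by (auto simp: reach_in_def)

lemma reach_sym:
  assumes "is_graph G" "reach_in G S x y" shows "reach_in G S y x"
proof -
  have "(\<lambda>a b. a \<in> S \<and> b \<in> S \<and> adj G a b)\<^sup>*\<^sup>* x y" "x \<in> S" "y \<in> S"
    using assms(2) by (auto simp: reach_in_def)
  then have "(\<lambda>a b. a \<in> S \<and> b \<in> S \<and> adj G a b)\<^sup>*\<^sup>* y x"
  proof (induction rule: rtranclp_induct)
    case base then show ?case by simp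
  next
    case (step b c)
    have e: "(\<lambda>a b. a \<in> S \<and> b \<in> S \<and> adj G a b) c b" using step gE(2)[OF assms(1)] by blast
    have "(\<lambda>a b. a \<in> S \<and> b \<in> S \<and> adj G a b)\<^sup>*\<^sup>* b x" using step by blast
    with e show ?case by (rule converse_rtranclp_into_rtranclp)
  qed
  then show ?thesis using assms(2) by (auto simp: reach_in_def)
qed

lemma reach_closed:
  assumes "reach_in G S x y" "x \<in> T"
    and "\<And>a b. a \<in> T \<Longrightarrow> b \<in> S \<Longrightarrow> adj G a b \<Longrightarrow> b \<in> T"
  shows "y \<in> T"
proof -
  have "(\<lambda>a b. a \<in> S \<and> b \<in> S \<and> adj G a b)\<^sup>*\<^sup>* x y" using assms(1) by (auto simp: reach_in_def)
  then show ?thesis using assms(2,3) by (induction rule: rtranclp_induct) auto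
qed

lemma two_comps:
  assumes "finite S" "x \<in> S" "y \<in> S" "\<not> reach_in G S x y"
  shows "card (components G S) \<ge> 2"
proof -
  let ?c = "\<lambda>x. {y \<in> S. reach_in G S x y}"
  have "?c x \<noteq> ?c y"
  proof
    assume "?c x = ?c y"
    then have "y \<in> ?c x" using assms reach_refl by blast
    then show False using assms by blast
  qed
  moreover have "?c x \<in> components G S" "?c y \<in> components G S"
    using assms by (auto simp: components_def)
  moreover have "finite (components G S)" using assms(1) by (simp add: components_def)
  ultimately have "card {?c x, ?c y} \<le> card (components G S)"
    by (intro card_mono) auto
  then show ?thesis using \<open>?c x \<noteq> ?c y\<close> by simp
qed

lemma bad_sep:
  assumes "is_graph G" "v \<in> bad_verts G"
  shows "\<exists>x y. x \<in> nbhd G v \<and> y \<in> nbhd G v \<and> \<not> reach_in G (nbhd G v) x y"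
proof (rule ccontr)
  assume H: "\<not> ?thesis"
  let ?S = "nbhd G v"
  let ?c = "\<lambda>x. {y \<in> ?S. reach_in G ?S x y}"
  have "card (components G ?S) \<ge> 2" using assms by (auto simp: bad_verts_def)
  have fin: "finite (components G ?S)"
    using gE(1)[OF assms(1)] by (simp add: components_def nbhd_def)
  have ne: "components G ?S \<noteq> {}" using \<open>card (components G ?S) \<ge> 2\<close> by auto
  then obtain C1 where C1: "C1 \<in> components G ?S" by blast
  have "\<exists>C2 \<in> components G ?S. C2 \<noteq> C1"
  proof (rule ccontr)
    assume "\<not> ?thesis"
    then have "components G ?S \<subseteq> {C1}" by blast
    then have "card (components G ?S) \<le> 1" using card_mono[of "{C1}"] by simp
    then show False using \<open>card (components G ?S) \<ge> 2\<close> by simp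
  qed
  then obtain C2 where "C2 \<in> components G ?S" "C2 \<noteq> C1" by blast
  with C1 obtain C1 C2 where "C1 \<in> components G ?S" "C2 \<in> components G ?S" "C1 \<noteq> C2"
    by blast
  then obtain x y where xy: "x \<in> ?S" "y \<in> ?S" "C1 = ?c x" "C2 = ?c y"
    by (auto simp: components_def)
  have "?c x = ?c y"
  proof (intro set_eqI iffI)
    fix z assume "z \<in> ?c x"
    then show "z \<in> ?c y" using H xy reach_trans reach_sym[OF assms(1)] by blast
  next
    fix z assume "z \<in> ?c y"
    then show "z \<in> ?c x" using H xy reach_trans reach_sym[OF assms(1)] by blast
  qed
  then show False using xy \<open>C1 \<noteq> C2\<close> by simp
qed

lemma bad_sep_from:
  assumes "is_graph G" "v \<in> bad_verts G" "u \<in> nbhd G v"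
  shows "\<exists>y. y \<in> nbhd G v \<and> \<not> reach_in G (nbhd G v) u y"
proof -
  obtain x y where "x \<in> nbhd G v" "y \<in> nbhd G v" "\<not> reach_in G (nbhd G v) x y"
    using bad_sep[OF assms(1,2)] by blast
  then show ?thesis using reach_trans reach_sym[OF assms(1)] by blast
qed

lemma sep_props:
  assumes "is_graph G" "u \<in> nbhd G v" "y \<in> nbhd G v" "\<not> reach_in G (nbhd G v) u y"
  shows "y \<noteq> u" "\<not> adj G u y" "adj G v y" "adj G v u"
proof -
  show "y \<noteq> u" using assms(2,4) reach_refl by metis
  show "\<not> adj G u y" using assms(2,3,4) reach_adj by metis
  show "adj G v y" "adj G v u" using assms(2,3) by (auto simp: nbhd_def)
qed

lemma prec_trans: "induced_sub A B \<Longrightarrow> induced_sub B C \<Longrightarrow> induced_sub A C"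
  unfolding induced_sub_def
proof (elim exE conjE)
  fix f g
  assume f: "inj_on f (verts A)" "f ` verts A \<subseteq> verts B"
     "\<forall>u\<in>verts A. \<forall>v\<in>verts A. adj A u v = adj B (f u) (f v)"
  assume g: "inj_on g (verts B)" "g ` verts B \<subseteq> verts C"
     "\<forall>u\<in>verts B. \<forall>v\<in>verts B. adj B u v = adj C (g u) (g v)"
  show "\<exists>h. inj_on h (verts A) \<and> h ` verts A \<subseteq> verts C \<and>
         (\<forall>u\<in>verts A. \<forall>v\<in>verts A. adj A u v = adj C (h u) (h v))"
    apply (rule exI[of _ "g \<circ> f"])
    using f g by (auto simp: inj_on_def image_subset_iff)
qed

lemma induced_subI:
  assumes "inj_on f (verts H)" "f ` verts H \<subseteq> verts G"
    "\<And>u v. u \<in> verts H \<Longrightarrow> v \<in> verts H \<Longrightarrow> adj H u v = adj G (f u) (f v)"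
  shows "induced_sub H G"
  using assms unfolding induced_sub_def by blast

lemma Kstar_emb:
  assumes g: "is_graph G"
    and av: "\<forall>i<n. a i \<in> verts G" and bv: "\<forall>i<n. b i \<in> verts G"
    and aa: "\<forall>i<n. \<forall>j<n. adj G (a i) (a j) = (i \<noteq> j)"
    and bb: "\<forall>i<n. \<forall>j<n. \<not> adj G (b i) (b j)"
    and ab: "\<forall>i<n. \<forall>j<n. adj G (a i) (b j) = (i = j)"
  shows "induced_sub (Kstar n) G"
proof -
  have ba: "\<forall>i<n. \<forall>j<n. adj G (b j) (a i) = (i = j)" using ab gE(2)[OF g] by blast
  define f where "f u = (if u < n then a u else b (u - n))" for u
  have vH: "verts (Kstar n) = {0..<2*n}" by (simp add: Kstar_def verts_def)
  have aH: "adj (Kstar n) u v = ((u < n \<and> v < n \<and> u \<noteq> v)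
      \<or> (u < n \<and> v = u + n) \<or> (v < n \<and> u = v + n))" for u v by (simp add: Kstar_def adj_def)
  show ?thesis
  proof (rule induced_subI)
    show "inj_on f (verts (Kstar n))"
    proof (rule inj_onI)
      fix u v assume uv: "u \<in> verts (Kstar n)" "v \<in> verts (Kstar n)" "f u = f v"
      show "u = v"
      proof (cases "u < n"; cases "v < n")
        assume h: "u < n" "v < n"
        then have "a u = a v" using uv by (simp add: f_def)
        then show ?thesis using h aa gE(3)[OF g] by metis
      next
        assume h: "u < n" "\<not> v < n"
        then have "v - n < n" using uv vH by auto
        then show ?thesis using h uv ab bb by (auto simp: f_def) (metis less_not_refl)
      next
        assume h: "\<not> u < n" "v < n"
        then have "u - n < n" using uv vH by auto
        then show ?thesis using h uv ab bb by (auto simp: f_def) (metis less_not_refl)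
      next
        assume h: "\<not> u < n" "\<not> v < n"
        then have "u - n < n" "v - n < n" using uv vH by auto
        then have "u - n = v - n" using h uv ab by (auto simp: f_def) (metis)
        then show ?thesis using h by simp
      qed
    qed
  next
    show "f ` verts (Kstar n) \<subseteq> verts G" using av bv vH by (auto simp: f_def)
  next
    fix u v assume uv: "u \<in> verts (Kstar n)" "v \<in> verts (Kstar n)"
    then have uv': "u < 2*n" "v < 2*n" using vH by auto
    show "adj (Kstar n) u v = adj G (f u) (f v)"
    proof (cases "u < n"; cases "v < n")
      assume "u < n" "v < n" then show ?thesis using aa by (auto simp: f_def aH)
    next
      assume h: "u < n" "\<not> v < n"
      then have "v - n < n" using uv' by auto
      then show ?thesis using h ab by (auto simp: f_def aH)
    next
      assume h: "\<not> u < n" "v < n"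
      then have "u - n < n" using uv' by auto
      then show ?thesis using h ba by (auto simp: f_def aH)
    next
      assume h: "\<not> u < n" "\<not> v < n"
      then have "u - n < n" "v - n < n" using uv' by auto
      then show ?thesis using h bb by (auto simp: f_def aH)
    qed
  qed
qed

lemma CK_emb:
  assumes g: "is_graph G"
    and av: "\<forall>i<n. a i \<in> verts G" and bv: "\<forall>i<n. b i \<in> verts G"
    and aa: "\<forall>i<n. \<forall>j<n. adj G (a i) (a j) = (i \<noteq> j)"
    and bb: "\<forall>i<n. \<forall>j<n. adj G (b i) (b j) = (i \<noteq> j)"
    and ab: "\<forall>i<n. \<forall>j<n. adj G (a i) (b j) = (i = j)"
    and dis: "\<forall>i<n. \<forall>j<n. a i \<noteq> b j"
  shows "induced_sub (CK n) G"
proof -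
  have ba: "\<forall>i<n. \<forall>j<n. adj G (b j) (a i) = (i = j)" using ab gE(2)[OF g] by blast
  define f where "f u = (if u < n then a u else b (u - n))" for u
  have vH: "verts (CK n) = {0..<2*n}" by (simp add: CK_def verts_def)
  have aH: "adj (CK n) u v = ((u < n \<and> v < n \<and> u \<noteq> v)
      \<or> (n \<le> u \<and> u < 2*n \<and> n \<le> v \<and> v < 2*n \<and> u \<noteq> v)
      \<or> (u < n \<and> v = u + n) \<or> (v < n \<and> u = v + n))" for u v by (simp add: CK_def adj_def)
  show ?thesis
  proof (rule induced_subI)
    show "inj_on f (verts (CK n))"
    proof (rule inj_onI)
      fix u v assume uv: "u \<in> verts (CK n)" "v \<in> verts (CK n)" "f u = f v"
      show "u = v"
      proof (cases "u < n"; cases "v < n")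
        assume h: "u < n" "v < n"
        then have "a u = a v" using uv by (simp add: f_def)
        then show ?thesis using h aa gE(3)[OF g] by metis
      next
        assume h: "u < n" "\<not> v < n"
        then have "v - n < n" using uv vH by auto
        then show ?thesis using h uv dis by (auto simp: f_def)
      next
        assume h: "\<not> u < n" "v < n"
        then have "u - n < n" using uv vH by auto
        then show ?thesis using h uv dis by (auto simp: f_def) (metis)
      next
        assume h: "\<not> u < n" "\<not> v < n"
        then have "u - n < n" "v - n < n" using uv vH by auto
        then have "u - n = v - n" using h uv bb gE(3)[OF g] by (auto simp: f_def) (metis)
        then show ?thesis using h by simp
      qed
    qed
  next
    show "f ` verts (CK n) \<subseteq> verts G" using av bv vH by (auto simp: f_def)
  next
    fix u v assume uv: "u \<in> verts (CK n)" "v \<in> verts (CK n)"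
    then have uv': "u < 2*n" "v < 2*n" using vH by auto
    show "adj (CK n) u v = adj G (f u) (f v)"
    proof (cases "u < n"; cases "v < n")
      assume "u < n" "v < n" then show ?thesis using aa by (auto simp: f_def aH)
    next
      assume h: "u < n" "\<not> v < n"
      then have "v - n < n" using uv' by auto
      then show ?thesis using h ab by (auto simp: f_def aH)
    next
      assume h: "\<not> u < n" "v < n"
      then have "u - n < n" using uv' by auto
      then show ?thesis using h ba by (auto simp: f_def aH)
    next
      assume h: "\<not> u < n" "\<not> v < n"
      then have "u - n < n" "v - n < n" using uv' by auto
      then show ?thesis using h bb uv' by (auto simp: f_def aH)
    qed
  qed
qed

lemma K1nstar_emb:
  assumes g: "is_graph G"
    and cv: "c \<in> verts G" and av: "\<forall>i<n. a i \<in> verts G" and bv: "\<forall>i<n. b i \<in> verts G"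
    and ca: "\<forall>i<n. adj G c (a i)" and cb: "\<forall>i<n. \<not> adj G c (b i)"
    and aa: "\<forall>i<n. \<forall>j<n. \<not> adj G (a i) (a j)"
    and bb: "\<forall>i<n. \<forall>j<n. \<not> adj G (b i) (b j)"
    and ab: "\<forall>i<n. \<forall>j<n. adj G (a i) (b j) = (i = j)"
    and cbd: "\<forall>i<n. c \<noteq> b i"
  shows "induced_sub (K1nstar n) G"
proof -
  have ba: "\<forall>i<n. \<forall>j<n. adj G (b j) (a i) = (i = j)" using ab gE(2)[OF g] by blast
  have ac: "\<forall>i<n. adj G (a i) c" using ca gE(2)[OF g] by blast
  have bc: "\<forall>i<n. \<not> adj G (b i) c" using cb gE(2)[OF g] by blast
  have cad: "\<forall>i<n. c \<noteq> a i" using ca gE(3)[OF g] by metis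
  define f where "f u = (if u = 0 then c else if u \<le> n then a (u - 1) else b (u - n - 1))" for u
  have vH: "verts (K1nstar n) = {0..2*n}" by (simp add: K1nstar_def verts_def)
  have aH: "adj (K1nstar n) u v = ((u = 0 \<and> 1 \<le> v \<and> v \<le> n) \<or> (v = 0 \<and> 1 \<le> u \<and> u \<le> n)
      \<or> (1 \<le> u \<and> u \<le> n \<and> v = u + n) \<or> (1 \<le> v \<and> v \<le> n \<and> u = v + n))" for u v
    by (simp add: K1nstar_def adj_def)
  have cls: "u = 0 \<or> (u \<noteq> 0 \<and> u \<le> n \<and> u - 1 < n) \<or> (\<not> u \<le> n \<and> u - n - 1 < n)"
    if "u \<in> verts (K1nstar n)" for u using that vH by auto
  show ?thesis
  proof (rule induced_subI)
    show "inj_on f (verts (K1nstar n))"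
    proof (rule inj_onI)
      fix u v assume uv: "u \<in> verts (K1nstar n)" "v \<in> verts (K1nstar n)" "f u = f v"
      from cls[OF uv(1)] cls[OF uv(2)] show "u = v"
      proof (elim disjE conjE)
        assume "u = 0" "v = 0" then show ?thesis by simp
      next
        assume h: "u = 0" "v \<noteq> 0" "v \<le> n" "v - 1 < n"
        then show ?thesis using uv cad by (auto simp: f_def)
      next
        assume h: "u = 0" "\<not> v \<le> n" "v - n - 1 < n"
        then show ?thesis using uv cbd by (auto simp: f_def)
      next
        assume h: "v = 0" "u \<noteq> 0" "u \<le> n" "u - 1 < n"
        then show ?thesis using uv cad by (auto simp: f_def)
      next
        assume h: "v = 0" "\<not> u \<le> n" "u - n - 1 < n"
        then show ?thesis using uv cbd by (auto simp: f_def)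
      next
        assume h: "u \<noteq> 0" "u \<le> n" "u - 1 < n" "v \<noteq> 0" "v \<le> n" "v - 1 < n"
        then have "a (u - 1) = a (v - 1)" using uv by (simp add: f_def)
        then have "u - 1 = v - 1" using h ab by metis
        then show ?thesis using h by simp
      next
        assume h: "u \<noteq> 0" "u \<le> n" "u - 1 < n" "\<not> v \<le> n" "v - n - 1 < n"
        then have e: "a (u - 1) = b (v - n - 1)" using uv by (simp add: f_def)
        show ?thesis
        proof (cases "u - 1 = v - n - 1")
          case True then show ?thesis using e h ab gE(3)[OF g] by metis
        next
          case False then show ?thesis using e h ab bb by metis
        qed
      next
        assume h: "\<not> u \<le> n" "u - n - 1 < n" "v \<noteq> 0" "v \<le> n" "v - 1 < n"
        then have e: "a (v - 1) = b (u - n - 1)" using uv by (simp add: f_def)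
        show ?thesis
        proof (cases "v - 1 = u - n - 1")
          case True then show ?thesis using e h ab gE(3)[OF g] by metis
        next
          case False then show ?thesis using e h ab bb by metis
        qed
      next
        assume h: "\<not> u \<le> n" "u - n - 1 < n" "\<not> v \<le> n" "v - n - 1 < n"
        then have "b (u - n - 1) = b (v - n - 1)" using uv by (simp add: f_def)
        then have "u - n - 1 = v - n - 1" using h ab by metis
        then show ?thesis using h by simp
      qed
    qed
  next
    show "f ` verts (K1nstar n) \<subseteq> verts G"
    proof
      fix x assume "x \<in> f ` verts (K1nstar n)"
      then obtain u where u: "u \<in> verts (K1nstar n)" "x = f u" by blast
      from cls[OF u(1)] show "x \<in> verts G" using u cv av bv by (auto simp: f_def)
    qed
  next
    fix u v assume uv: "u \<in> verts (K1nstar n)" "v \<in> verts (K1nstar n)"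
    from cls[OF uv(1)] cls[OF uv(2)] show "adj (K1nstar n) u v = adj G (f u) (f v)"
    proof (elim disjE conjE)
      assume "u = 0" "v = 0" then show ?thesis using gE(3)[OF g] by (simp add: f_def aH)
    next
      assume h: "u = 0" "v \<noteq> 0" "v \<le> n" "v - 1 < n"
      then show ?thesis using ca by (auto simp: f_def aH)
    next
      assume h: "u = 0" "\<not> v \<le> n" "v - n - 1 < n"
      then show ?thesis using cb by (auto simp: f_def aH)
    next
      assume h: "v = 0" "u \<noteq> 0" "u \<le> n" "u - 1 < n"
      then show ?thesis using ac by (auto simp: f_def aH)
    next
      assume h: "v = 0" "\<not> u \<le> n" "u - n - 1 < n"
      then show ?thesis using bc by (auto simp: f_def aH)
    next
      assume h: "u \<noteq> 0" "u \<le> n" "u - 1 < n" "v \<noteq> 0" "v \<le> n" "v - 1 < n"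
      then show ?thesis using aa by (auto simp: f_def aH)
    next
      assume h: "u \<noteq> 0" "u \<le> n" "u - 1 < n" "\<not> v \<le> n" "v - n - 1 < n"
      have "adj G (a (u - 1)) (b (v - n - 1)) = (u - 1 = v - n - 1)" using h ab by blast
      moreover have "(u - 1 = v - n - 1) = (v = u + n)" using h by auto
      ultimately show ?thesis using h by (auto simp: f_def aH)
    next
      assume h: "\<not> u \<le> n" "u - n - 1 < n" "v \<noteq> 0" "v \<le> n" "v - 1 < n"
      have "adj G (b (u - n - 1)) (a (v - 1)) = (v - 1 = u - n - 1)" using h ba by blast
      moreover have "(v - 1 = u - n - 1) = (u = v + n)" using h by auto
      ultimately show ?thesis using h by (auto simp: f_def aH)
    next
      assume h: "\<not> u \<le> n" "u - n - 1 < n" "\<not> v \<le> n" "v - n - 1 < n"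
      then show ?thesis using bb by (auto simp: f_def aH)
    qed
  qed
qed

lemma Path_emb:
  assumes "inj_on p {..<m}" "\<forall>i<m. p i \<in> verts G"
    "\<forall>i<m. \<forall>j<m. adj G (p i) (p j) = (j = i + 1 \<or> i = j + 1)"
  shows "induced_sub (Path m) G"
proof (rule induced_subI[where f = p])
  have vH: "verts (Path m) = {0..<m}" by (simp add: Path_def verts_def)
  show "inj_on p (verts (Path m))" using assms(1) vH by (simp add: lessThan_atLeast0)
  show "p ` verts (Path m) \<subseteq> verts G" using assms(2) vH by auto
  fix u v assume "u \<in> verts (Path m)" "v \<in> verts (Path m)"
  then show "adj (Path m) u v = adj G (p u) (p v)" using assms(3) vH
    by (auto simp: Path_def adj_def)
qed

lemma K2n_emb:
  assumes g: "is_graph G"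
    and v: "x \<in> verts G" "y \<in> verts G" "\<forall>i<n. w i \<in> verts G"
    and xy: "x \<noteq> y" "\<not> adj G x y"
    and xw: "\<forall>i<n. adj G x (w i)" and yw: "\<forall>i<n. adj G y (w i)"
    and ww: "\<forall>i<n. \<forall>j<n. \<not> adj G (w i) (w j)"
    and winj: "inj_on w {..<n}"
  shows "induced_sub (K2n n) G"
proof -
  have wx: "\<forall>i<n. adj G (w i) x" "\<forall>i<n. adj G (w i) y" using xw yw gE(2)[OF g] by blast+
  have yx: "\<not> adj G y x" using xy gE(2)[OF g] by blast
  have d: "\<forall>i<n. x \<noteq> w i" "\<forall>i<n. y \<noteq> w i" using xw yw gE(3)[OF g] by metis+
  define f where "f u = (if u = 0 then x else if u = 1 then y else w (u - 2))" for u
  have vH: "verts (K2n n) = {0..<n+2}" by (simp add: K2n_def verts_def)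
  have aH: "adj (K2n n) u v = ((u < 2 \<and> 2 \<le> v \<and> v < n + 2) \<or> (v < 2 \<and> 2 \<le> u \<and> u < n + 2))"
    for u v by (simp add: K2n_def adj_def)
  have cls: "u = 0 \<or> u = 1 \<or> (2 \<le> u \<and> u - 2 < n)" if "u \<in> verts (K2n n)" for u
    using that vH by auto
  show ?thesis
  proof (rule induced_subI)
    show "inj_on f (verts (K2n n))"
    proof (rule inj_onI)
      fix u v assume uv: "u \<in> verts (K2n n)" "v \<in> verts (K2n n)" "f u = f v"
      from cls[OF uv(1)] cls[OF uv(2)] show "u = v"
      proof (elim disjE conjE)
        assume h: "2 \<le> u" "u - 2 < n" "2 \<le> v" "v - 2 < n"
        then have "w (u - 2) = w (v - 2)" using uv by (simp add: f_def)
        then have "u - 2 = v - 2" using winj h by (simp add: inj_on_def)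
        then show ?thesis using h by simp
      qed (use uv d xy in \<open>auto simp: f_def\<close>)
    qed
  next
    show "f ` verts (K2n n) \<subseteq> verts G"
    proof
      fix z assume "z \<in> f ` verts (K2n n)"
      then obtain u where u: "u \<in> verts (K2n n)" "z = f u" by blast
      from cls[OF u(1)] show "z \<in> verts G" using u v by (auto simp: f_def)
    qed
  next
    fix u v assume uv: "u \<in> verts (K2n n)" "v \<in> verts (K2n n)"
    from cls[OF uv(1)] cls[OF uv(2)] show "adj (K2n n) u v = adj G (f u) (f v)"
      by (elim disjE conjE) (use xy yx xw yw wx ww gE(3)[OF g] in \<open>auto simp: f_def aH\<close>)
  qed
qed

lemma Tgraph_emb:
  assumes g: "is_graph G"
    and v: "z \<in> verts G" "\<forall>i<n. y i \<in> verts G" "\<forall>i<n. w i \<in> verts G"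
    and yy: "\<forall>i<n. \<forall>j<n. adj G (y i) (y j) = (i \<noteq> j)"
    and ww: "\<forall>i<n. \<forall>j<n. \<not> adj G (w i) (w j)"
    and yw: "\<forall>i<n. \<forall>j<n. adj G (y i) (w j)"
    and zw: "\<forall>i<n. adj G z (w i)" and zy: "\<forall>i<n. \<not> adj G z (y i)"
    and zyd: "\<forall>i<n. z \<noteq> y i"
    and winj: "inj_on w {..<n}"
  shows "induced_sub (Tgraph n) G"
proof -
  have wy: "\<forall>i<n. \<forall>j<n. adj G (w j) (y i)" using yw gE(2)[OF g] by blast
  have wz: "\<forall>i<n. adj G (w i) z" using zw gE(2)[OF g] by blast
  have yz: "\<forall>i<n. \<not> adj G (y i) z" using zy gE(2)[OF g] by blast
  have d1: "\<forall>i<n. \<forall>j<n. y i \<noteq> w j" using yw gE(3)[OF g] by metis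
  have d2: "\<forall>i<n. z \<noteq> w i" using zw gE(3)[OF g] by metis
  have d1s: "\<forall>i<n. \<forall>j<n. w j \<noteq> y i" "\<forall>i<n. w i \<noteq> z" "\<forall>i<n. y i \<noteq> z"
    using d1 d2 zyd by metis+
  define f where "f u = (if u < n then y u else if u < 2*n then w (u - n) else z)" for u
  have vH: "verts (Tgraph n) = {0..2*n}" by (simp add: Tgraph_def verts_def)
  have aH: "adj (Tgraph n) u v = ((u < n \<and> v < n \<and> u \<noteq> v)
      \<or> (u < n \<and> n \<le> v \<and> v < 2*n) \<or> (v < n \<and> n \<le> u \<and> u < 2*n)
      \<or> (u = 2*n \<and> n \<le> v \<and> v < 2*n) \<or> (v = 2*n \<and> n \<le> u \<and> u < 2*n))"
    for u v by (simp add: Tgraph_def adj_def)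
  have cls: "u < n \<or> (n \<le> u \<and> u < 2*n \<and> u - n < n) \<or> u = 2*n" if "u \<in> verts (Tgraph n)" for u
    using that vH by auto
  show ?thesis
  proof (rule induced_subI)
    show "inj_on f (verts (Tgraph n))"
    proof (rule inj_onI)
      fix u v assume uv: "u \<in> verts (Tgraph n)" "v \<in> verts (Tgraph n)" "f u = f v"
      from cls[OF uv(1)] cls[OF uv(2)] show "u = v"
      proof (elim disjE conjE)
        assume h: "u < n" "v < n"
        then have "y u = y v" using uv by (simp add: f_def)
        then show ?thesis using h yy gE(3)[OF g] by metis
      next
        assume h: "n \<le> u" "u < 2*n" "u - n < n" "n \<le> v" "v < 2*n" "v - n < n"
        then have "w (u - n) = w (v - n)" using uv by (simp add: f_def)
        then have "u - n = v - n" using winj h by (simp add: inj_on_def)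
        then show ?thesis using h by simp
      qed (use uv d1 d2 zyd d1s in \<open>auto simp: f_def\<close>)
    qed
  next
    show "f ` verts (Tgraph n) \<subseteq> verts G"
    proof
      fix x assume "x \<in> f ` verts (Tgraph n)"
      then obtain u where u: "u \<in> verts (Tgraph n)" "x = f u" by blast
      from cls[OF u(1)] show "x \<in> verts G" using u v by (auto simp: f_def)
    qed
  next
    fix u v assume uv: "u \<in> verts (Tgraph n)" "v \<in> verts (Tgraph n)"
    from cls[OF uv(1)] cls[OF uv(2)] show "adj (Tgraph n) u v = adj G (f u) (f v)"
      by (elim disjE conjE) (use yy ww yw wy zw wz zy yz gE(3)[OF g] in \<open>auto simp: f_def aH\<close>)
  qed
qed

fun lay :: "graph \<Rightarrow> nat \<Rightarrow> nat \<Rightarrow> nat set" where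
  "lay G r 0 = {r}"
| "lay G r (Suc k) = {v \<in> verts G. (\<forall>i\<le>k. v \<notin> lay G r i) \<and> (\<exists>u\<in>lay G r k. adj G u v)}"

lemma lay_verts: "r \<in> verts G \<Longrightarrow> v \<in> lay G r k \<Longrightarrow> v \<in> verts G"
  by (cases k) auto

lemma lay_disj: "v \<in> lay G r i \<Longrightarrow> v \<in> lay G r j \<Longrightarrow> i = j"
proof (induction i j rule: linorder_less_wlog)
  case (less i j)
  then obtain k where "j = Suc k" "i \<le> k" by (cases j) auto
  then show ?case using less by auto
qed auto

lemma lay_next:
  assumes "u \<in> lay G r i" "adj G u v" "v \<in> verts G"
  shows "\<exists>j\<le>Suc i. v \<in> lay G r j"
proof (cases "\<exists>j\<le>i. v \<in> lay G r j")
  case True then show ?thesis using le_SucI by blast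
next
  case False
  then have "v \<in> lay G r (Suc i)" using assms by auto
  then show ?thesis by blast
qed

lemma lay_adj:
  assumes "is_graph G" "u \<in> lay G r i" "v \<in> lay G r j" "adj G u v"
  shows "j \<le> Suc i"
proof -
  obtain j' where "j' \<le> Suc i" "v \<in> lay G r j'"
    using lay_next[OF assms(2,4)] gE(5)[OF assms(1) assms(4)] by blast
  then show ?thesis using lay_disj assms(3) by blast
qed

lemma lay_cover:
  assumes "is_graph G" "connected_graph G" "r \<in> verts G" "v \<in> verts G"
  shows "\<exists>k. v \<in> lay G r k"
proof -
  have "reach_in G (verts G) r v" using assms by (auto simp: connected_graph_def)
  then have "(\<lambda>a b. a \<in> verts G \<and> b \<in> verts G \<and> adj G a b)\<^sup>*\<^sup>* r v" by (simp add: reach_in_def)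
  then show ?thesis
  proof (induction rule: rtranclp_induct)
    case base then show ?case using lay.simps(1) by blast
  next
    case (step b c)
    then obtain k where "b \<in> lay G r k" by blast
    then show ?case using lay_next step by blast
  qed
qed

lemma lay_path:
  "v \<in> lay G r k \<Longrightarrow> \<exists>p. p k = v \<and> (\<forall>i\<le>k. p i \<in> lay G r i) \<and> (\<forall>i<k. adj G (p i) (p (Suc i)))"
proof (induction k arbitrary: v)
  case 0 then show ?case by (intro exI[of _ "\<lambda>_. v"]) auto
next
  case (Suc k)
  then obtain u where u: "u \<in> lay G r k" "adj G u v" by auto
  obtain p where p: "p k = u" "\<forall>i\<le>k. p i \<in> lay G r i" "\<forall>i<k. adj G (p i) (p (Suc i))"
    using Suc.IH[OF u(1)] by blast
  show ?case
  proof (intro exI[of _ "p(Suc k := v)"] conjI allI impI)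
    fix i assume "i \<le> Suc k" then show "(p(Suc k := v)) i \<in> lay G r i"
      using p Suc.prems by (cases "i = Suc k") auto
  next
    fix i assume "i < Suc k" then show "adj G ((p(Suc k := v)) i) ((p(Suc k := v)) (Suc i))"
      using p u by (cases "i = k") auto
  qed simp
qed

lemma lay_Path:
  assumes g: "is_graph G" and r: "r \<in> verts G" and v: "v \<in> lay G r k" and m: "m \<le> Suc k"
  shows "induced_sub (Path m) G"
proof -
  obtain p where p: "p k = v" "\<forall>i\<le>k. p i \<in> lay G r i" "\<forall>i<k. adj G (p i) (p (Suc i))"
    using lay_path[OF v] by blast
  show ?thesis
  proof (rule Path_emb)
    show "inj_on p {..<m}"
    proof (rule inj_onI)
      fix x y assume xy: "x \<in> {..<m}" "y \<in> {..<m}" "p x = p y"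
      have "x \<le> k" "y \<le> k" using xy m by auto
      then have 1: "p x \<in> lay G r x" and 2: "p y \<in> lay G r y" using p(2) by blast+
      from 2 have "p x \<in> lay G r y" using xy(3) by simp
      with 1 have "p x \<in> lay G r x" "p x \<in> lay G r y" by auto
      then show "x = y" by (rule lay_disj)
    qed
    show "\<forall>i<m. p i \<in> verts G"
    proof (intro allI impI)
      fix i assume "i < m" then have "i \<le> k" using m by auto
      then show "p i \<in> verts G" using p(2) lay_verts[OF r] by blast
    qed
    show "\<forall>i<m. \<forall>j<m. adj G (p i) (p j) = (j = i + 1 \<or> i = j + 1)"
    proof (intro allI impI)
      fix i j assume ij: "i < m" "j < m"
      show "adj G (p i) (p j) = (j = i + 1 \<or> i = j + 1)"
      proof
        assume "adj G (p i) (p j)"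
        then have "j \<le> Suc i" "i \<le> Suc j" "i \<noteq> j"
          using lay_adj[OF g, of "p i" r i "p j" j] lay_adj[OF g, of "p j" r j "p i" i]
            p(2) ij m gE(2,3)[OF g] by auto
        then show "j = i + 1 \<or> i = j + 1" by auto
      next
        assume "j = i + 1 \<or> i = j + 1"
        then show "adj G (p i) (p j)" using p(3) ij m gE(2)[OF g] by auto
      qed
    qed
  qed
qed

definition Ffree :: "nat \<Rightarrow> graph \<Rightarrow> bool" where
  "Ffree n G \<longleftrightarrow> \<not> induced_sub (Kstar n) G \<and> \<not> induced_sub (K1nstar n) G
     \<and> \<not> induced_sub (Path n) G \<and> \<not> induced_sub (K2n n) G
     \<and> \<not> induced_sub (CK n) G \<and> \<not> induced_sub (Tgraph n) G"

lemma hom_sym: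
  fixes m :: nat and x :: "nat \<Rightarrow> nat"
  assumes g: "is_graph G" and h: "\<forall>i j. i<j \<longrightarrow> j<m \<longrightarrow> adj G (x i) (x j) = B"
  shows "\<forall>i<m. \<forall>j<m. adj G (x i) (x j) = (B \<and> i \<noteq> j)"
proof (intro allI impI)
  fix i j assume ij: "i < m" "j < m"
  show "adj G (x i) (x j) = (B \<and> i \<noteq> j)"
  proof (cases i j rule: linorder_cases)
    case less then show ?thesis using h ij by auto
  next
    case equal then show ?thesis using gE(3)[OF g] by auto
  next
    case greater then show ?thesis using h ij gE(2)[OF g] by (metis less_not_refl)
  qed
qed

lemma configC:
  assumes g: "is_graph G" and F: "Ffree n G" and m: "2*n+2 \<le> m"
    and uv: "u \<in> verts G" and Wv: "\<forall>i<m. W i \<in> verts G" and Yv: "\<forall>i<m. Y i \<in> verts G"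
    and WW: "\<forall>i<m. \<forall>j<m. \<not> adj G (W i) (W j)" and Winj: "inj_on W {..<m}"
    and uW: "\<forall>i<m. adj G u (W i)" and uY: "\<forall>i<m. \<not> adj G u (Y i)" and uYd: "\<forall>i<m. u \<noteq> Y i"
    and WY: "\<forall>i<m. adj G (Y i) (W i)"
    and hom: "(\<forall>i j. i<j \<longrightarrow> j<m \<longrightarrow> Y i = Y j) \<or>
      (\<exists>B1 B2 B3. inj_on Y {..<m} \<and> (\<forall>i j. i<j \<longrightarrow> j<m \<longrightarrow>
          adj G (Y i) (W j) = B1 \<and> adj G (Y j) (W i) = B2 \<and> adj G (Y i) (Y j) = B3))"
  shows False
proof -
  have FK: "\<not> induced_sub (Kstar n) G" "\<not> induced_sub (K1nstar n) G"
     "\<not> induced_sub (K2n n) G" "\<not> induced_sub (Tgraph n) G"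
    using F by (auto simp: Ffree_def)
  have sym: "adj G a b = adj G b a" for a b using gE(2)[OF g] by blast
  have Wn: "inj_on W {..<n}" using Winj m by (auto simp: inj_on_def)
  have mn: "\<And>i. i < n \<Longrightarrow> i < m" "\<And>i. i < n \<Longrightarrow> n + i < m" "\<And>i. i < n \<Longrightarrow> i + 2 < m"
    "n < m" "Suc n < m" "0 < m" "1 < m" "\<And>i. i < n \<Longrightarrow> Suc (Suc i) < m" "Suc n < m" "0 < m" "1 < m" using m by auto
  have Wvn: "\<forall>i<n. W i \<in> verts G" and Yvn: "\<forall>i<n. Y i \<in> verts G"
    and WWn: "\<forall>i<n. \<forall>j<n. \<not> adj G (W i) (W j)" and uWn: "\<forall>i<n. adj G u (W i)"
    and uYn: "\<forall>i<n. \<not> adj G u (Y i)" and uYdn: "\<forall>i<n. u \<noteq> Y i"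
    using Wv Yv WW uW uY uYd by (simp_all add: mn(1))
  from hom show False
  proof
    assume eq: "\<forall>i j. i<j \<longrightarrow> j<m \<longrightarrow> Y i = Y j"
    have YW: "\<forall>i<n. adj G (Y 0) (W i)"
    proof (intro allI impI)
      fix i assume "i < n"
      then have "i < m" using m by auto
      then have "Y 0 = Y i"
        using eq[rule_format, of 0 i] by (cases "i = 0") auto
      then show "adj G (Y 0) (W i)" using WY \<open>i < m\<close> by simp
    qed
    have "induced_sub (K2n n) G"
    proof (rule K2n_emb[OF g])
      show "u \<in> verts G" by (rule uv)
      show "Y 0 \<in> verts G" using Yv mn by blast
      show "u \<noteq> Y 0" using uYd mn by blast
      show "\<not> adj G u (Y 0)" using uY mn by blast
    qed (rule Wvn uWn YW WWn Wn)+
    then show False using FK by blast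
  next
    assume "\<exists>B1 B2 B3. inj_on Y {..<m} \<and> (\<forall>i j. i<j \<longrightarrow> j<m \<longrightarrow>
          adj G (Y i) (W j) = B1 \<and> adj G (Y j) (W i) = B2 \<and> adj G (Y i) (Y j) = B3)"
    then obtain B1 B2 B3 where Yinj: "inj_on Y {..<m}" and
      H: "\<forall>i j. i<j \<longrightarrow> j<m \<longrightarrow>
          adj G (Y i) (W j) = B1 \<and> adj G (Y j) (W i) = B2 \<and> adj G (Y i) (Y j) = B3"
      by (elim exE conjE)
    have H1: "\<And>i j. i<j \<Longrightarrow> j<m \<Longrightarrow> adj G (Y i) (W j) = B1"
      and H2: "\<And>i j. i<j \<Longrightarrow> j<m \<Longrightarrow> adj G (Y j) (W i) = B2"
      and H3: "\<And>i j. i<j \<Longrightarrow> j<m \<Longrightarrow> adj G (Y i) (Y j) = B3"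
      using H by simp_all
    have YY: "adj G (Y i) (Y j) = (B3 \<and> i \<noteq> j)" if "i < m" "j < m" for i j
    proof (cases i j rule: linorder_cases)
      case less then show ?thesis using H3 that by auto
    next
      case equal then show ?thesis using gE(3)[OF g] by auto
    next
      case greater then show ?thesis using H3[of j i] that sym by auto
    qed
    have YWg: "adj G (Y i) (W j) = (if i = j then True else if i < j then B1 else B2)"
      if "i < m" "j < m" for i j
    proof (cases i j rule: linorder_cases)
      case less then show ?thesis using H1 that by auto
    next
      case equal then show ?thesis using WY that by auto
    next
      case greater then show ?thesis using H2[of j i] that by auto
    qed
    have Y01: "Y 0 \<noteq> Y 1" "Y n \<noteq> Y (Suc n)"
      using inj_onD[OF Yinj, of 0 1] inj_onD[OF Yinj, of n "Suc n"] mn(4-7) by auto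
    have W2: "inj_on (\<lambda>i. W (i + 2)) {..<n}" "inj_on (\<lambda>i. W (n + i)) {..<n}"
    proof (rule_tac [!] inj_onI)
      fix x y assume "x \<in> {..<n}" "y \<in> {..<n}" "W (x + 2) = W (y + 2)"
      then show "x = y" using inj_onD[OF Winj, of "x+2" "y+2"] mn(3) by auto
    next
      fix x y assume "x \<in> {..<n}" "y \<in> {..<n}" "W (n + x) = W (n + y)"
      then show "x = y" using inj_onD[OF Winj, of "n+x" "n+y"] mn(2) by auto
    qed
    have W2v: "\<forall>i<n. W (i+2) \<in> verts G" "\<forall>i<n. W (n+i) \<in> verts G" "\<forall>i<n. Y (n+i) \<in> verts G"
      using Wv Yv by (simp_all add: mn)
    have W2W: "\<forall>i<n. \<forall>j<n. \<not> adj G (W (i+2)) (W (j+2))" "\<forall>i<n. \<forall>j<n. \<not> adj G (W (n+i)) (W (n+j))"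
      using WW by (simp_all add: mn)
    have uW2: "\<forall>i<n. adj G u (W (n+i))" "\<forall>i<n. \<not> adj G u (Y (n+i))" "\<forall>i<n. u \<noteq> Y (n+i)"
      using uW uY uYd by (simp_all add: mn)
    have YYn: "\<forall>i<n. \<forall>j<n. adj G (Y i) (Y j) = (B3 \<and> i \<noteq> j)"
      "\<forall>i<n. \<forall>j<n. adj G (Y (n+i)) (Y (n+j)) = (B3 \<and> i \<noteq> j)"
      using YY by (simp_all add: mn)
    show False
    proof (cases B1; cases B2; cases B3)
      assume b: "B1" "B2" "B3"
      have "induced_sub (Tgraph n) G"
      proof (rule Tgraph_emb[OF g, of u n Y W])
        show "\<forall>i<n. \<forall>j<n. adj G (Y i) (Y j) = (i \<noteq> j)" using YYn b by auto
        show "\<forall>i<n. \<forall>j<n. adj G (Y i) (W j)" using YWg b mn by auto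
      qed (rule uv Yvn Wvn WWn uWn uYn uYdn Wn)+
      then show False using FK by blast
    next
      assume b: "B1" "B2" "\<not> B3"
      have "induced_sub (K2n n) G"
      proof (rule K2n_emb[OF g, of "Y 0" "Y 1" n "\<lambda>i. W (i+2)"])
        show "Y 0 \<in> verts G" "Y 1 \<in> verts G" using Yv mn by blast+
        show "\<not> adj G (Y 0) (Y 1)" using YY mn b by auto
        show "\<forall>i<n. adj G (Y 0) (W (i + 2))" "\<forall>i<n. adj G (Y 1) (W (i + 2))" using YWg mn b by auto
      qed (rule Y01 W2 W2v W2W)+
      then show False using FK by blast
    next
      assume b: "B1" "\<not> B2" "B3"
      have "induced_sub (Tgraph n) G"
      proof (rule Tgraph_emb[OF g, of u n Y "\<lambda>i. W (n+i)"])
        show "\<forall>i<n. \<forall>j<n. adj G (Y i) (Y j) = (i \<noteq> j)" using YYn b by auto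
        show "\<forall>i<n. \<forall>j<n. adj G (Y i) (W (n + j))" using YWg b mn by auto
        show "\<forall>i<n. \<forall>j<n. \<not> adj G (W (n+i)) (W (n+j))" by (rule W2W)
      qed (rule uv Yvn W2v uW2 uYn uYdn W2)+
      then show False using FK by blast
    next
      assume b: "B1" "\<not> B2" "\<not> B3"
      have "induced_sub (K2n n) G"
      proof (rule K2n_emb[OF g, of "Y 0" "Y 1" n "\<lambda>i. W (i+2)"])
        show "Y 0 \<in> verts G" "Y 1 \<in> verts G" using Yv mn by blast+
        show "\<not> adj G (Y 0) (Y 1)" using YY mn b by auto
        show "\<forall>i<n. adj G (Y 0) (W (i + 2))" "\<forall>i<n. adj G (Y 1) (W (i + 2))" using YWg mn b by auto
      qed (rule Y01 W2 W2v W2W)+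
      then show False using FK by blast
    next
      assume b: "\<not> B1" "B2" "B3"
      have "induced_sub (Tgraph n) G"
      proof (rule Tgraph_emb[OF g, of u n "\<lambda>i. Y (n+i)" W])
        show "\<forall>i<n. \<forall>j<n. adj G (Y (n+i)) (Y (n+j)) = (i \<noteq> j)" using YYn b by auto
        show "\<forall>i<n. \<forall>j<n. adj G (Y (n + i)) (W j)" using YWg b mn by auto
      qed (rule uv W2v Wvn WWn uWn uW2 Wn)+
      then show False using FK by blast
    next
      assume b: "\<not> B1" "B2" "\<not> B3"
      have "induced_sub (K2n n) G"
      proof (rule K2n_emb[OF g, of "Y n" "Y (Suc n)" n W])
        show "Y n \<in> verts G" "Y (Suc n) \<in> verts G" using Yv mn by blast+
        show "\<not> adj G (Y n) (Y (Suc n))" using YY mn b by auto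
        show "\<forall>i<n. adj G (Y n) (W i)" "\<forall>i<n. adj G (Y (Suc n)) (W i)" using YWg mn b by auto
      qed (rule Y01 Wvn WWn Wn)+
      then show False using FK by blast
    next
      assume b: "\<not> B1" "\<not> B2" "B3"
      have "induced_sub (Kstar n) G"
      proof (rule Kstar_emb[OF g, of n Y W])
        show "\<forall>i<n. \<forall>j<n. adj G (Y i) (Y j) = (i \<noteq> j)" using YYn b by auto
        show "\<forall>i<n. \<forall>j<n. adj G (Y i) (W j) = (i = j)" using YWg b mn by auto
      qed (rule Yvn Wvn WWn)+
      then show False using FK by blast
    next
      assume b: "\<not> B1" "\<not> B2" "\<not> B3"
      have "induced_sub (K1nstar n) G"
      proof (rule K1nstar_emb[OF g, of u n W Y])
        show "\<forall>i<n. \<forall>j<n. \<not> adj G (Y i) (Y j)" using YYn b by auto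
        show "\<forall>i<n. \<forall>j<n. adj G (W i) (Y j) = (i = j)" using YWg b mn sym by auto
      qed (rule uv Yvn Wvn WWn uWn uYn uYdn)+
      then show False using FK by blast
    qed
  qed
qed

lemma bits3:
  fixes p q r :: bool
  defines "v \<equiv> (if p then 4 else 0) + (if q then 2 else 0) + (if r then 1 else (0::nat))"
  shows "p = (4 \<le> v)" "q = (2 \<le> v mod 4)" "r = odd v" "v < 8"
  unfolding v_def by (cases p; cases q; cases r; simp)+

lemma strict_inj:
  fixes h :: "nat \<Rightarrow> nat"
  assumes "\<forall>i j. i<j \<longrightarrow> j<m \<longrightarrow> h i < (h j :: nat)"
  shows "inj_on h {..<m}"
proof (rule inj_onI)
  fix x y assume "x \<in> {..<m}" "y \<in> {..<m}" "h x = h y"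
  then show "x = y"
  proof (cases x y rule: linorder_cases)
    case less then show ?thesis using assms \<open>y \<in> {..<m}\<close> \<open>h x = h y\<close> by force
  next
    case greater then show ?thesis using assms \<open>x \<in> {..<m}\<close> \<open>h x = h y\<close> by force
  qed
qed

lemma inj_comp_strict:
  fixes h :: "nat \<Rightarrow> nat"
  assumes "inj_on w {..<N}" "\<forall>i<m. h i < N" "\<forall>i j. i<j \<longrightarrow> j<m \<longrightarrow> h i < (h j :: nat)"
  shows "inj_on (\<lambda>i. w (h i)) {..<m}"
proof (rule inj_onI)
  fix x y assume xy: "x \<in> {..<m}" "y \<in> {..<m}" "w (h x) = w (h y)"
  then have "h x = h y" using inj_onD[OF assms(1)] assms(2) by auto
  then show "x = y" using strict_inj[OF assms(3)] xy by (auto dest: inj_onD)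
qed

lemma lemmaC:
  "\<exists>M::nat. \<forall>G u w. is_graph G \<longrightarrow> Ffree n G \<longrightarrow> (\<forall>i<M. w i \<in> bad_verts G)
     \<longrightarrow> (\<forall>i<M. \<forall>j<M. \<not> adj G (w i) (w j)) \<longrightarrow> inj_on w {..<M}
     \<longrightarrow> (\<forall>i<M. adj G u (w i)) \<longrightarrow> False"
proof -
  obtain N where N: "\<forall>f::nat\<Rightarrow>nat\<Rightarrow>nat. (\<forall>i j. i<j \<longrightarrow> j<N \<longrightarrow> f i j < 9) \<longrightarrow>
     (\<exists>h c. (\<forall>i<2*n+2. h i < N) \<and> (\<forall>i j. i<j \<longrightarrow> j<2*n+2 \<longrightarrow> h i < h j)
        \<and> (\<forall>i j. i<j \<longrightarrow> j<2*n+2 \<longrightarrow> f (h i) (h j) = c))"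
    using ramsey_seq[of 9 "2*n+2"] by auto
  show ?thesis
  proof (rule exI[of _ N], intro allI impI)
    fix G u w
    assume g: "is_graph G" and F: "Ffree n G" and wb: "\<forall>i<N. w i \<in> bad_verts G"
      and ww: "\<forall>i<N. \<forall>j<N. \<not> adj G (w i) (w j)" and winj: "inj_on w {..<N}"
      and uw: "\<forall>i<N. adj G u (w i)"
    have "\<forall>i. \<exists>y. i < N \<longrightarrow> y \<in> nbhd G (w i) \<and> \<not> reach_in G (nbhd G (w i)) u y"
    proof (intro allI)
      fix i show "\<exists>y. i < N \<longrightarrow> y \<in> nbhd G (w i) \<and> \<not> reach_in G (nbhd G (w i)) u y"
      proof (cases "i < N")
        case True
        then have "u \<in> nbhd G (w i)" using uw gE(2,4)[OF g] by (auto simp: nbhd_def)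
        then show ?thesis using bad_sep_from[OF g] wb True by blast
      qed simp
    qed
    then have "\<exists>y. \<forall>i. i < N \<longrightarrow> y i \<in> nbhd G (w i) \<and> \<not> reach_in G (nbhd G (w i)) u (y i)"
      by (rule choice)
    then obtain y where y: "\<And>i. i < N \<Longrightarrow> y i \<in> nbhd G (w i) \<and> \<not> reach_in G (nbhd G (w i)) u (y i)"
      by blast
    have unb: "\<And>i. i < N \<Longrightarrow> u \<in> nbhd G (w i)" using uw gE(2,4)[OF g] by (auto simp: nbhd_def)
    have yp: "\<And>i. i < N \<Longrightarrow> y i \<noteq> u \<and> \<not> adj G u (y i) \<and> adj G (w i) (y i)"
      using sep_props[OF g unb] y by blast
    define f where "f a b = (if y a = y b then 8 else (if adj G (y a) (w b) then 4 else 0)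
       + (if adj G (y b) (w a) then 2 else 0) + (if adj G (y a) (y b) then 1 else (0::nat)))" for a b
    have "f i j < 9" for i j
    proof (cases "y i = y j")
      case False
      then show ?thesis using bits3(4)[of "adj G (y i) (w j)" "adj G (y j) (w i)" "adj G (y i) (y j)"]
        by (simp add: f_def)
    qed (simp add: f_def)
    then have f9: "\<forall>i j. i<j \<longrightarrow> j<N \<longrightarrow> f i j < 9" by blast
    obtain h c where hN: "\<forall>i<2*n+2. h i < N" and hm: "\<forall>i j. i<j \<longrightarrow> j<2*n+2 \<longrightarrow> h i < h j"
      and hc: "\<forall>i j. i<j \<longrightarrow> j<2*n+2 \<longrightarrow> f (h i) (h j) = c"
      using mp[OF spec[OF N, of f] f9] by (elim exE conjE)
    define m where "m = 2*n+2"
    define W where "W i = w (h i)" for i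
    define Y where "Y i = y (h i)" for i
    show False
    proof (rule configC[OF g F, of m u W Y])
      show "2 * n + 2 \<le> m" by (simp add: m_def)
      have "h 0 < N" using hN by simp
      then have "adj G u (w (h 0))" using uw by blast
      then show "u \<in> verts G" using gE(4)[OF g] by blast
      show "\<forall>i<m. W i \<in> verts G" using wb hN by (auto simp: W_def m_def bad_verts_def)
      show "\<forall>i<m. Y i \<in> verts G" using y hN by (auto simp: Y_def m_def nbhd_def)
      show "\<forall>i<m. \<forall>j<m. \<not> adj G (W i) (W j)" using ww hN by (simp add: W_def m_def)
      show "inj_on W {..<m}" unfolding W_def m_def by (rule inj_comp_strict[OF winj hN hm])
      show "\<forall>i<m. adj G u (W i)" using uw hN by (simp add: W_def m_def)
      show "\<forall>i<m. \<not> adj G u (Y i)" "\<forall>i<m. u \<noteq> Y i" using yp hN by (auto simp: Y_def m_def)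
      show "\<forall>i<m. adj G (Y i) (W i)" using yp hN gE(2)[OF g] by (auto simp: Y_def W_def m_def)
      show "(\<forall>i j. i<j \<longrightarrow> j<m \<longrightarrow> Y i = Y j) \<or>
        (\<exists>B1 B2 B3. inj_on Y {..<m} \<and> (\<forall>i j. i<j \<longrightarrow> j<m \<longrightarrow>
          adj G (Y i) (W j) = B1 \<and> adj G (Y j) (W i) = B2 \<and> adj G (Y i) (Y j) = B3))"
      proof (cases "c = 8")
        case True
        have "Y i = Y j" if "i < j" "j < m" for i j
        proof -
          have "f (h i) (h j) = 8" using hc that True by (simp add: m_def)
          then show ?thesis using bits3(4) by (auto simp: f_def Y_def split: if_splits)
        qed
        then show ?thesis by blast
      next
        case False
        have ne: "Y i \<noteq> Y j" and
          bb: "adj G (Y i) (W j) = (4 \<le> c) \<and> adj G (Y j) (W i) = (2 \<le> c mod 4) \<and> adj G (Y i) (Y j) = odd c"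
          if "i < j" "j < m" for i j
        proof -
          have fc: "f (h i) (h j) = c" using hc that by (simp add: m_def)
          then show "Y i \<noteq> Y j" using False by (auto simp: f_def Y_def)
          then have "c = (if adj G (Y i) (W j) then 4 else 0)
              + (if adj G (Y j) (W i) then 2 else 0) + (if adj G (Y i) (Y j) then 1 else (0::nat))"
            using fc by (simp add: f_def Y_def W_def)
          then show "adj G (Y i) (W j) = (4 \<le> c) \<and> adj G (Y j) (W i) = (2 \<le> c mod 4) \<and> adj G (Y i) (Y j) = odd c"
            using bits3[of "adj G (Y i) (W j)" "adj G (Y j) (W i)" "adj G (Y i) (Y j)"] by simp
        qed
        have "inj_on Y {..<m}"
        proof (rule inj_onI)
          fix a b assume ab: "a \<in> {..<m}" "b \<in> {..<m}" "Y a = Y b"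
          show "a = b"
          proof (rule ccontr)
            assume "a \<noteq> b"
            then have "a < b \<or> b < a" by auto
            then show False
            proof
              assume "a < b" then show False using ne[of a b] ab by auto
            next
              assume "b < a" then show False using ne[of b a] ab by auto
            qed
          qed
        qed
        then show ?thesis using bb by blast
      qed
    qed
  qed
qed

lemma lemmaA:
  "\<exists>R::nat. \<forall>G q. is_graph G \<longrightarrow> Ffree n G \<longrightarrow> (\<forall>i<R. q i \<in> bad_verts G)
     \<longrightarrow> (\<forall>i<R. \<forall>j<R. adj G (q i) (q j) = (i \<noteq> j)) \<longrightarrow> False"
proof -
  obtain N where N: "\<forall>f::nat\<Rightarrow>nat\<Rightarrow>nat. (\<forall>i j. i<j \<longrightarrow> j<N \<longrightarrow> f i j < 2) \<longrightarrow>
     (\<exists>h c. (\<forall>i<n. h i < N) \<and> (\<forall>i j. i<j \<longrightarrow> j<n \<longrightarrow> h i < h j)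
        \<and> (\<forall>i j. i<j \<longrightarrow> j<n \<longrightarrow> f (h i) (h j) = c))"
    using ramsey_seq[of 2 n] by auto
  show ?thesis
  proof (rule exI[of _ "N+2"], intro allI impI)
    fix G q
    assume g: "is_graph G" and F: "Ffree n G" and qb: "\<forall>i<N+2. q i \<in> bad_verts G"
      and qq: "\<forall>i<N+2. \<forall>j<N+2. adj G (q i) (q j) = (i \<noteq> j)"
    define R where "R = N + 2"
    have sym: "adj G a b = adj G b a" for a b using gE(2)[OF g] by blast
    define jj where "jj i = (if i = 0 then 1 else (0::nat))" for i :: nat
    have jj: "jj i < R" "jj i \<noteq> i" for i by (auto simp: jj_def R_def)
    have qn: "i < R \<Longrightarrow> k < R \<Longrightarrow> k \<noteq> i \<Longrightarrow> q k \<in> nbhd G (q i)" for i k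
      using qq gE(5)[OF g] by (auto simp: nbhd_def R_def)
    have "\<forall>i. \<exists>p. i < R \<longrightarrow> p \<in> nbhd G (q i) \<and> \<not> reach_in G (nbhd G (q i)) (q (jj i)) p"
    proof (intro allI)
      fix i show "\<exists>p. i < R \<longrightarrow> p \<in> nbhd G (q i) \<and> \<not> reach_in G (nbhd G (q i)) (q (jj i)) p"
      proof (cases "i < R")
        case True
        then have "q (jj i) \<in> nbhd G (q i)" using qn jj by blast
        then show ?thesis using bad_sep_from[OF g, of "q i" "q (jj i)"] qb True R_def by blast
      qed simp
    qed
    then have "\<exists>p. \<forall>i. i < R \<longrightarrow> p i \<in> nbhd G (q i) \<and> \<not> reach_in G (nbhd G (q i)) (q (jj i)) (p i)"
      by (rule choice)
    then obtain p where p: "\<And>i. i < R \<Longrightarrow> p i \<in> nbhd G (q i) \<and> \<not> reach_in G (nbhd G (q i)) (q (jj i)) (p i)"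
      by blast
    have pa: "adj G (q i) (p i)" if "i < R" for i using p[OF that] by (simp add: nbhd_def)
    have pv: "p i \<in> verts G" if "i < R" for i using p[OF that] by (simp add: nbhd_def)
    have pc: "p i \<noteq> q i" if "i < R" for i using pa[OF that] gE(3)[OF g] by metis
    have pb: "\<not> adj G (p i) (q k) \<and> p i \<noteq> q k" if "i < R" "k < R" "k \<noteq> i" for i k
    proof -
      let ?S = "nbhd G (q i)"
      have r1: "reach_in G ?S (q (jj i)) (q k)"
      proof (cases "k = jj i")
        case True then show ?thesis using reach_refl qn that by simp
      next
        case False
        then have "adj G (q (jj i)) (q k)" using qq jj that R_def by auto
        then show ?thesis using reach_adj qn jj that by metis
      qed
      have pS: "p i \<in> ?S" "\<not> reach_in G ?S (q (jj i)) (p i)" using p that(1) by auto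
      show ?thesis
      proof
        show "\<not> adj G (p i) (q k)"
        proof
          assume "adj G (p i) (q k)"
          then have "reach_in G ?S (q k) (p i)" using reach_adj[of "q k" ?S "p i" G] qn[OF that] pS sym by auto
          then show False using r1 pS reach_trans by metis
        qed
        show "p i \<noteq> q k" using r1 pS by auto
      qed
    qed
    define f where "f a b = (if adj G (p a) (p b) then 1 else (0::nat))" for a b
    have f2: "\<forall>i j. i<j \<longrightarrow> j<N \<longrightarrow> f i j < 2" by (simp add: f_def)
    obtain h c where hN: "\<forall>i<n. h i < N" and hm: "\<forall>i j. i<j \<longrightarrow> j<n \<longrightarrow> h i < h j"
      and hc: "\<forall>i j. i<j \<longrightarrow> j<n \<longrightarrow> f (h i) (h j) = c"
      using mp[OF spec[OF N, of f] f2] by (elim exE conjE)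
    have hR: "h i < R" if "i < n" for i using hN that R_def by auto
    have hinj: "inj_on h {..<n}" by (rule strict_inj[OF hm])
    have hne: "h i \<noteq> h j" if "i < n" "j < n" "i \<noteq> j" for i j
      using inj_onD[OF hinj, of i j] that by auto
    have AA: "\<forall>i<n. \<forall>j<n. adj G (q (h i)) (q (h j)) = (i \<noteq> j)"
    proof (intro allI impI)
      fix i j assume "i < n" "j < n"
      then have "adj G (q (h i)) (q (h j)) = (h i \<noteq> h j)" using qq hR R_def by auto
      moreover have "(h i \<noteq> h j) = (i \<noteq> j)" using hne \<open>i < n\<close> \<open>j < n\<close> by blast
      ultimately show "adj G (q (h i)) (q (h j)) = (i \<noteq> j)" by simp
    qed
    have AB: "\<forall>i<n. \<forall>j<n. adj G (q (h i)) (p (h j)) = (i = j)"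
    proof (intro allI impI)
      fix i j assume ij: "i < n" "j < n"
      show "adj G (q (h i)) (p (h j)) = (i = j)"
      proof (cases "i = j")
        case True then show ?thesis using pa hR ij by auto
      next
        case False
        then have "\<not> adj G (p (h j)) (q (h i))" using pb[of "h j" "h i"] hR hne ij by auto
        then show ?thesis using False sym by auto
      qed
    qed
    have BBh: "\<forall>i j. i<j \<longrightarrow> j<n \<longrightarrow> adj G (p (h i)) (p (h j)) = (c = 1)"
    proof (intro allI impI)
      fix i j assume ij: "i < j" "j < n"
      then have "f (h i) (h j) = c" using hc by blast
      then show "adj G (p (h i)) (p (h j)) = (c = 1)" by (auto simp: f_def split: if_splits)
    qed
    have BB: "\<forall>i<n. \<forall>j<n. adj G (p (h i)) (p (h j)) = (c = 1 \<and> i \<noteq> j)"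
      using hom_sym[OF g, of n "\<lambda>i. p (h i)" "c = 1"] BBh by blast
    have Av: "\<forall>i<n. q (h i) \<in> verts G" using qb hR R_def by (auto simp: bad_verts_def)
    have Bv: "\<forall>i<n. p (h i) \<in> verts G" using pv hR by auto
    show False
    proof (cases "c = 1")
      case True
      have "induced_sub (CK n) G"
      proof (rule CK_emb[OF g Av Bv AA _ AB])
        show "\<forall>i<n. \<forall>j<n. adj G (p (h i)) (p (h j)) = (i \<noteq> j)" using BB True by auto
        show "\<forall>i<n. \<forall>j<n. q (h i) \<noteq> p (h j)"
        proof (intro allI impI)
          fix i j assume ij: "i < n" "j < n"
          show "q (h i) \<noteq> p (h j)"
          proof (cases "i = j")
            case True then show ?thesis using pc hR ij by metis
          next
            case False then show ?thesis using pb[of "h j" "h i"] hR hne ij by metis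
          qed
        qed
      qed
      then show False using F by (simp add: Ffree_def)
    next
      case False
      have "induced_sub (Kstar n) G"
      proof (rule Kstar_emb[OF g Av Bv AA _ AB])
        show "\<forall>i<n. \<forall>j<n. \<not> adj G (p (h i)) (p (h j))" using BB False by auto
      qed
      then show False using F by (simp add: Ffree_def)
    qed
  qed
qed

lemma extract_idx:
  fixes X :: "nat set"
  assumes "finite X" "k \<le> card X"
  shows "\<exists>t. inj_on t {..<k} \<and> t ` {..<k} \<subseteq> X"
proof -
  have "card {..<k} \<le> card X" using assms by simp
  then show ?thesis using card_le_inj[of "{..<k}" X] assms(1) by auto
qed

lemma card_ge_image:
  fixes h :: "nat \<Rightarrow> nat"
  assumes "inj_on h B" "h ` B \<subseteq> T" "finite T"
  shows "card B \<le> card T"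
  using card_inj_on_le[OF assms] .

lemma lemmaD:
  "\<forall>M::nat. \<exists>N::nat. \<forall>G r s. is_graph G \<longrightarrow> Ffree n G \<longrightarrow> r \<in> verts G
     \<longrightarrow> (\<forall>i<N. s i \<in> lay G r d) \<longrightarrow> inj_on s {..<N}
     \<longrightarrow> (\<forall>i<N. \<forall>j<N. \<not> adj G (s i) (s j))
     \<longrightarrow> (\<forall>w. card {i. i < N \<and> adj G w (s i)} < M) \<longrightarrow> False"
proof (induction d)
  case 0
  show ?case
  proof (intro allI exI[of _ 2] impI)
    fix M G r s
    assume "\<forall>i<2. s i \<in> lay G r 0" "inj_on s {..<(2::nat)}"
    then have "s 0 = s 1" by simp
    then show False using inj_onD[OF \<open>inj_on s {..<(2::nat)}\<close>, of 0 1] by simp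
  qed
next
  case (Suc d)
  show ?case
  proof (intro allI)
    fix M :: nat
    define M' where "M' = M + n + 1"
    obtain N' :: nat where N': "\<forall>G r s. is_graph G \<longrightarrow> Ffree n G \<longrightarrow> r \<in> verts G
     \<longrightarrow> (\<forall>i<N'. s i \<in> lay G r d) \<longrightarrow> inj_on s {..<N'}
     \<longrightarrow> (\<forall>i<N'. \<forall>j<N'. \<not> adj G (s i) (s j))
     \<longrightarrow> (\<forall>w. card {i. i < N' \<and> adj G w (s i)} < M') \<longrightarrow> False"
      using spec[OF Suc.IH, of M'] by blast
    define m where "m = N' + n + M + 2"
    obtain N where N: "\<forall>f::nat\<Rightarrow>nat\<Rightarrow>nat. (\<forall>i j. i<j \<longrightarrow> j<N \<longrightarrow> f i j < 9) \<longrightarrow>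
       (\<exists>h c. (\<forall>i<m. h i < N) \<and> (\<forall>i j. i<j \<longrightarrow> j<m \<longrightarrow> h i < h j)
          \<and> (\<forall>i j. i<j \<longrightarrow> j<m \<longrightarrow> f (h i) (h j) = c))"
      using ramsey_seq[of 9 m] by auto
    show "\<exists>N::nat. \<forall>G r s. is_graph G \<longrightarrow> Ffree n G \<longrightarrow> r \<in> verts G
     \<longrightarrow> (\<forall>i<N. s i \<in> lay G r (Suc d)) \<longrightarrow> inj_on s {..<N}
     \<longrightarrow> (\<forall>i<N. \<forall>j<N. \<not> adj G (s i) (s j))
     \<longrightarrow> (\<forall>w. card {i. i < N \<and> adj G w (s i)} < M) \<longrightarrow> False"
    proof (rule exI[of _ N], intro allI impI)
      fix G r s
      assume g: "is_graph G" and F: "Ffree n G" and r: "r \<in> verts G"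
        and sl: "\<forall>i<N. s i \<in> lay G r (Suc d)" and sinj: "inj_on s {..<N}"
        and ss: "\<forall>i<N. \<forall>j<N. \<not> adj G (s i) (s j)"
        and deg: "\<forall>w. card {i. i < N \<and> adj G w (s i)} < M"
      have sym: "adj G a b = adj G b a" for a b using gE(2)[OF g] by blast
      have "\<forall>i. \<exists>u. i < N \<longrightarrow> u \<in> lay G r d \<and> adj G u (s i)"
        using sl by auto
      then have "\<exists>p. \<forall>i. i < N \<longrightarrow> p i \<in> lay G r d \<and> adj G (p i) (s i)"
        by (rule choice)
      then obtain p where p: "\<And>i. i < N \<Longrightarrow> p i \<in> lay G r d \<and> adj G (p i) (s i)" by blast
      define f where "f a b = (if p a = p b then 8 else (if adj G (p a) (p b) then 4 else 0)
         + (if adj G (s a) (p b) then 2 else 0) + (if adj G (s b) (p a) then 1 else (0::nat)))" for a b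
      have "f i j < 9" for i j
      proof (cases "p i = p j")
        case False
        then show ?thesis using bits3(4)[of "adj G (p i) (p j)" "adj G (s i) (p j)" "adj G (s j) (p i)"]
          by (simp add: f_def)
      qed (simp add: f_def)
      then have f9: "\<forall>i j. i<j \<longrightarrow> j<N \<longrightarrow> f i j < 9" by blast
      obtain h c where hN: "\<forall>i<m. h i < N" and hm: "\<forall>i j. i<j \<longrightarrow> j<m \<longrightarrow> h i < h j"
        and hc: "\<forall>i j. i<j \<longrightarrow> j<m \<longrightarrow> f (h i) (h j) = c"
        using mp[OF spec[OF N, of f] f9] by (elim exE conjE)
      have hinj: "inj_on h {..<m}" by (rule strict_inj[OF hm])
      have shinj: "inj_on (\<lambda>i. s (h i)) {..<m}" by (rule inj_comp_strict[OF sinj hN hm])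
      have ps: "adj G (p (h i)) (s (h i))" if "i < m" for i using p hN that by blast
      have many: False if "\<forall>i<m. adj G x (s (h i))" for x
      proof -
        have "h ` {..<m} \<subseteq> {i. i < N \<and> adj G x (s i)}" using that hN by auto
        then have "card (h ` {..<m}) \<le> card {i. i < N \<and> adj G x (s i)}"
          by (intro card_mono) auto
        moreover have "card (h ` {..<m}) = m" using card_image[OF hinj] by simp
        ultimately have "m \<le> card {i. i < N \<and> adj G x (s i)}" by simp
        then show False using deg[rule_format, of x] by (simp add: m_def)
      qed
      show False
      proof (cases "c = 8")
        case True
        have "\<forall>i<m. adj G (p (h 0)) (s (h i))"
        proof (intro allI impI)
          fix i assume i: "i < m"
          show "adj G (p (h 0)) (s (h i))"
          proof (cases "i = 0")
            case True then show ?thesis using ps i by simp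
          next
            case False
            then have "f (h 0) (h i) = 8" using hc i \<open>c = 8\<close> by auto
            then have "p (h 0) = p (h i)" using bits3(4) by (auto simp: f_def split: if_splits)
            then show ?thesis using ps i by simp
          qed
        qed
        then show False using many by blast
      next
        case False
        have bb: "p (h i) \<noteq> p (h j) \<and> adj G (p (h i)) (p (h j)) = (4 \<le> c) \<and>
            adj G (s (h i)) (p (h j)) = (2 \<le> c mod 4) \<and> adj G (s (h j)) (p (h i)) = odd c"
          if "i < j" "j < m" for i j
        proof -
          have fc: "f (h i) (h j) = c" using hc that by blast
          then have ne: "p (h i) \<noteq> p (h j)" using False by (auto simp: f_def)
          then have "c = (if adj G (p (h i)) (p (h j)) then 4 else 0)
              + (if adj G (s (h i)) (p (h j)) then 2 else 0) + (if adj G (s (h j)) (p (h i)) then 1 else (0::nat))"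
            using fc by (simp add: f_def)
          then show ?thesis
            using ne bits3[of "adj G (p (h i)) (p (h j))" "adj G (s (h i)) (p (h j))" "adj G (s (h j)) (p (h i))"]
            by simp
        qed
        have m1: "0 < m" "m - 1 < m" "1 < m" by (auto simp: m_def)
        show False
        proof (cases "2 \<le> c mod 4")
          case True
          have "\<forall>i<m. adj G (p (h (m - 1))) (s (h i))"
          proof (intro allI impI)
            fix i assume i: "i < m"
            show "adj G (p (h (m-1))) (s (h i))"
            proof (cases "i = m - 1")
              case True then show ?thesis using ps i by simp
            next
              case False
              then have "i < m - 1" using i by auto
              then show ?thesis using bb[of i "m-1"] True m1 sym by auto
            qed
          qed
          then show False using many by blast
        next
          case nB2: False
          show False
          proof (cases "odd c")
            case True
            have "\<forall>i<m. adj G (p (h 0)) (s (h i))"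
            proof (intro allI impI)
              fix i assume i: "i < m"
              show "adj G (p (h 0)) (s (h i))"
              proof (cases "i = 0")
                case True then show ?thesis using ps i by simp
              next
                case False
                then show ?thesis using bb[of 0 i] \<open>odd c\<close> i sym by auto
              qed
            qed
            then show False using many by blast
          next
            case nB3: False
            have PS: "adj G (p (h i)) (s (h j)) = (i = j)" if "i < m" "j < m" for i j
            proof (cases i j rule: linorder_cases)
              case less then show ?thesis using bb[of i j] that nB3 sym by auto
            next
              case equal then show ?thesis using ps that by simp
            next
              case greater then show ?thesis using bb[of j i] that nB2 sym by auto
            qed
            have PP: "adj G (p (h i)) (p (h j)) = (4 \<le> c \<and> i \<noteq> j)" if "i < m" "j < m" for i j
            proof (cases i j rule: linorder_cases)
              case less then show ?thesis using bb[of i j] that by auto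
            next
              case equal then show ?thesis using gE(3)[OF g] by simp
            next
              case greater then show ?thesis using bb[of j i] that sym by auto
            qed
            have pv: "p (h i) \<in> verts G" if "i < m" for i using ps[OF that] gE(4)[OF g] by blast
            have sv: "s (h i) \<in> verts G" if "i < m" for i using ps[OF that] gE(5)[OF g] by blast
            have SS: "\<not> adj G (s (h i)) (s (h j))" if "i < m" "j < m" for i j using ss hN that by blast
            have nm: "n \<le> m" "N' \<le> m" by (auto simp: m_def)
            show False
            proof (cases "4 \<le> c")
              case True
              have "induced_sub (Kstar n) G"
              proof (rule Kstar_emb[OF g, of n "\<lambda>i. p (h i)" "\<lambda>i. s (h i)"])
                show "\<forall>i<n. p (h i) \<in> verts G" "\<forall>i<n. s (h i) \<in> verts G" using pv sv nm by auto
                show "\<forall>i<n. \<forall>j<n. adj G (p (h i)) (p (h j)) = (i \<noteq> j)" using PP True nm by auto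
                show "\<forall>i<n. \<forall>j<n. \<not> adj G (s (h i)) (s (h j))" using SS nm by auto
                show "\<forall>i<n. \<forall>j<n. adj G (p (h i)) (s (h j)) = (i = j)" using PS nm by auto
              qed
              then show False using F by (simp add: Ffree_def)
            next
              case nB1: False
              have N'i: "is_graph G \<longrightarrow> Ffree n G \<longrightarrow> r \<in> verts G
                 \<longrightarrow> (\<forall>i<N'. p (h i) \<in> lay G r d) \<longrightarrow> inj_on (\<lambda>i. p (h i)) {..<N'}
                 \<longrightarrow> (\<forall>i<N'. \<forall>j<N'. \<not> adj G (p (h i)) (p (h j)))
                 \<longrightarrow> (\<forall>w. card {i. i < N' \<and> adj G w (p (h i))} < M') \<longrightarrow> False"
                using spec[OF spec[OF spec[OF N', of G], of r], of "\<lambda>i. p (h i)"] by simp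
              have c1: "\<forall>i<N'. p (h i) \<in> lay G r d" using p hN nm by auto
              have c2: "inj_on (\<lambda>i. p (h i)) {..<N'}"
                proof (rule inj_onI)
                  fix a b assume ab: "a \<in> {..<N'}" "b \<in> {..<N'}" "p (h a) = p (h b)"
                  show "a = b"
                  proof (rule ccontr)
                    assume "a \<noteq> b"
                    then have "a < b \<or> b < a" by auto
                    then show False using bb[of a b] bb[of b a] ab nm by auto
                  qed
                qed
              have c3: "\<forall>i<N'. \<forall>j<N'. \<not> adj G (p (h i)) (p (h j))" using PP nB1 nm by auto
              have c4: "\<forall>w. card {i. i < N' \<and> adj G w (p (h i))} < M'"
                proof (rule allI, rule ccontr)
                  fix w
                  assume "\<not> card {i. i < N' \<and> adj G w (p (h i))} < M'"
                  then have cA: "M' \<le> card {i. i < N' \<and> adj G w (p (h i))}" by simp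
                  define A where "A = {i. i < N' \<and> adj G w (p (h i))}"
                  define B where "B = {i \<in> A. adj G w (s (h i))}"
                  define C where "C = {i \<in> A. w = s (h i)}"
                  have finA: "finite A" by (simp add: A_def)
                  have "h ` B \<subseteq> {i. i < N \<and> adj G w (s i)}" using hN nm by (auto simp: B_def A_def)
                  moreover have "inj_on h B" using hinj nm by (auto simp: B_def A_def inj_on_def)
                  ultimately have "card B \<le> card {i. i < N \<and> adj G w (s i)}"
                    using card_inj_on_le by (metis finite_Collect_conjI finite_lessThan lessThan_def)
                  then have cB: "card B < M" using deg by (meson le_less_trans)
                  have cC: "card C \<le> 1"
                  proof -
                    have "finite C" using finA by (simp add: C_def)
                    moreover have "\<forall>a\<in>C. \<forall>b\<in>C. a = b"
                    proof (intro ballI)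
                      fix a b assume "a \<in> C" "b \<in> C"
                      then have "s (h a) = s (h b)" "a < m" "b < m" using nm by (auto simp: C_def A_def)
                      then show "a = b" using inj_onD[OF shinj] by auto
                    qed
                    ultimately show ?thesis using card_le_Suc0_iff_eq by auto
                  qed
                  have finBC: "finite B" "finite C" using finA by (simp_all add: B_def C_def)
                  have "card A - card B \<le> card (A - B)" using diff_card_le_card_Diff[OF finBC(1)] .
                  moreover have "card (A - B) - card C \<le> card (A - B - C)"
                    using diff_card_le_card_Diff[OF finBC(2)] .
                  ultimately have "n \<le> card (A - B - C)" using cA cB cC by (simp add: A_def M'_def)
                  then obtain t where t: "inj_on t {..<n}" "t ` {..<n} \<subseteq> A - B - C"
                    using extract_idx[of "A - B - C" n] finA by auto
                  have tA: "t i < N'" "adj G w (p (h (t i)))" "\<not> adj G w (s (h (t i)))" "w \<noteq> s (h (t i))"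
                    if "i < n" for i using t(2) that by (auto simp: A_def B_def C_def)
                  have tm: "t i < m" if "i < n" for i using tA(1)[OF that] nm by simp
                  have "induced_sub (K1nstar n) G"
                  proof (rule K1nstar_emb[OF g, of w n "\<lambda>i. p (h (t i))" "\<lambda>i. s (h (t i))"])
                    show "w \<in> verts G"
                    proof (cases "n = 0")
                      case True
                      then have "card A \<ge> 1" using cA by (simp add: M'_def A_def)
                      then obtain i where "i \<in> A" by (metis card.empty empty_iff not_one_le_zero subsetI subset_empty)
                      then show ?thesis using gE(4)[OF g] by (auto simp: A_def)
                    next
                      case False
                      then show ?thesis using tA[of 0] gE(4)[OF g] by auto
                    qed
                    show "\<forall>i<n. p (h (t i)) \<in> verts G" "\<forall>i<n. s (h (t i)) \<in> verts G"
                      using pv sv tm by auto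
                    show "\<forall>i<n. adj G w (p (h (t i)))" "\<forall>i<n. \<not> adj G w (s (h (t i)))"
                      "\<forall>i<n. w \<noteq> s (h (t i))" using tA by auto
                    show "\<forall>i<n. \<forall>j<n. \<not> adj G (p (h (t i))) (p (h (t j)))" using PP nB1 tm by auto
                    show "\<forall>i<n. \<forall>j<n. \<not> adj G (s (h (t i))) (s (h (t j)))" using SS tm by auto
                    show "\<forall>i<n. \<forall>j<n. adj G (p (h (t i))) (s (h (t j))) = (i = j)"
                    proof (intro allI impI)
                      fix i j assume ij: "i < n" "j < n"
                      have "adj G (p (h (t i))) (s (h (t j))) = (t i = t j)" using PS tm ij by auto
                      also have "\<dots> = (i = j)" using inj_onD[OF t(1)] ij by auto
                      finally show "adj G (p (h (t i))) (s (h (t j))) = (i = j)" .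
                    qed
                  qed
                  then show False using F by (simp add: Ffree_def)
                qed
              show False using N'i g F r c1 c2 c3 c4 by blast
            qed
          qed
        qed
      qed
    qed
  qed
qed

lemma bad_I2:
  assumes g: "is_graph X" and vx: "adj X v x" and vy: "adj X v y" and xy: "x \<noteq> y"
    and nc: "\<And>b. adj X v b \<Longrightarrow> \<not> adj X x b"
  shows "v \<in> bad_verts X"
proof -
  let ?S = "nbhd X v"
  have xS: "x \<in> ?S" and yS: "y \<in> ?S" using vx vy gE(5)[OF g] by (auto simp: nbhd_def)
  have nr: "\<not> reach_in X ?S x y"
  proof
    assume "reach_in X ?S x y"
    then have "y \<in> {x}"
    proof (rule reach_closed)
      show "x \<in> {x}" by simp
      fix a b assume "a \<in> {x}" "b \<in> ?S" "adj X a b"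
      then show "b \<in> {x}" using nc by (auto simp: nbhd_def)
    qed
    then show False using xy by simp
  qed
  have "finite ?S" using gE(1)[OF g] by (simp add: nbhd_def)
  then have "card (components X ?S) \<ge> 2" using two_comps xS yS nr by blast
  then show ?thesis using vx gE(4)[OF g] by (simp add: bad_verts_def)
qed

lemma conn_hub:
  assumes g: "is_graph X" and z: "z \<in> verts X" and h: "\<And>x. x \<in> verts X \<Longrightarrow> reach_in X (verts X) x z"
  shows "connected_graph X"
  unfolding connected_graph_def
proof (intro ballI)
  fix x y assume "x \<in> verts X" "y \<in> verts X"
  then show "reach_in X (verts X) x y" using h reach_sym[OF g] reach_trans by metis
qed

lemma reach1: "is_graph X \<Longrightarrow> adj X x y \<Longrightarrow> reach_in X (verts X) x y"
  using reach_adj gE(4,5) by metis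

lemma reach2: "is_graph X \<Longrightarrow> adj X x y \<Longrightarrow> adj X y z \<Longrightarrow> reach_in X (verts X) x z"
  using reach1 reach_trans by metis

lemma bad_card:
  assumes g: "is_graph X" and S: "S \<subseteq> bad_verts X" and c: "k \<le> card S"
  shows "k \<le> card (bad_verts X)"
proof -
  have "finite (bad_verts X)" using gE(1)[OF g] by (simp add: bad_verts_def)
  then show ?thesis using card_mono[OF _ S] c by simp
qed

lemma Kstar_adj: "adj (Kstar n) u v = ((u < n \<and> v < n \<and> u \<noteq> v)
      \<or> (u < n \<and> v = u + n) \<or> (v < n \<and> u = v + n))" by (simp add: Kstar_def adj_def)
lemma Kstar_verts: "verts (Kstar n) = {0..<2*n}" by (simp add: Kstar_def verts_def)

lemma Kstar_graph: "is_graph (Kstar n)"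
  unfolding is_graph_def Kstar_adj Kstar_verts by auto

lemma Kstar_conn: "connected_graph (Kstar n)"
proof (cases "n = 0")
  case True then show ?thesis by (simp add: connected_graph_def Kstar_verts)
next
  case False
  show ?thesis
  proof (rule conn_hub[OF Kstar_graph, of 0])
    show "0 \<in> verts (Kstar n)" using False by (simp add: Kstar_verts)
    fix x assume x: "x \<in> verts (Kstar n)"
    show "reach_in (Kstar n) (verts (Kstar n)) x 0"
    proof (cases "x < n")
      case True
      show ?thesis
      proof (cases "x = 0")
        case True then show ?thesis using x reach_refl by simp
      next
        case False then show ?thesis using \<open>x < n\<close> reach1[OF Kstar_graph] by (simp add: Kstar_adj)
      qed
    next
      case xn: False
      then have "adj (Kstar n) x (x - n)" using x by (auto simp: Kstar_adj Kstar_verts)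
      show ?thesis
      proof (cases "x - n = 0")
        case True then show ?thesis using reach1[OF Kstar_graph] \<open>adj (Kstar n) x (x - n)\<close> by simp
      next
        case False
        then have "adj (Kstar n) (x - n) 0" using x xn by (auto simp: Kstar_adj Kstar_verts)
        then show ?thesis using reach2[OF Kstar_graph] \<open>adj (Kstar n) x (x - n)\<close> by blast
      qed
    qed
  qed
qed

lemma Kstar_bad: assumes "2 \<le> n" shows "n \<le> card (bad_verts (Kstar n))"
proof (rule bad_card[OF Kstar_graph, of "{0..<n}"])
  show "{0..<n} \<subseteq> bad_verts (Kstar n)"
  proof
    fix i assume i: "i \<in> {0..<n}"
    define j where "j = (if i = 0 then 1 else 0::nat)"
    have j: "j < n" "j \<noteq> i" using assms by (auto simp: j_def)
    show "i \<in> bad_verts (Kstar n)"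
      by (rule bad_I2[OF Kstar_graph, where v = i and x = "i+n" and y = j]) (use i j in \<open>auto simp: Kstar_adj\<close>)
  qed
qed simp

lemma CK_adj: "adj (CK n) u v = ((u < n \<and> v < n \<and> u \<noteq> v)
      \<or> (n \<le> u \<and> u < 2*n \<and> n \<le> v \<and> v < 2*n \<and> u \<noteq> v)
      \<or> (u < n \<and> v = u + n) \<or> (v < n \<and> u = v + n))" by (simp add: CK_def adj_def)
lemma CK_verts: "verts (CK n) = {0..<2*n}" by (simp add: CK_def verts_def)

lemma CK_graph: "is_graph (CK n)"
  unfolding is_graph_def CK_adj CK_verts by auto

lemma CK_conn: "connected_graph (CK n)"
proof (cases "n = 0")
  case True then show ?thesis by (simp add: connected_graph_def CK_verts)
next
  case False
  show ?thesis
  proof (rule conn_hub[OF CK_graph, of 0])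
    show "0 \<in> verts (CK n)" using False by (simp add: CK_verts)
    fix x assume x: "x \<in> verts (CK n)"
    show "reach_in (CK n) (verts (CK n)) x 0"
    proof (cases "x < n")
      case True
      show ?thesis
      proof (cases "x = 0")
        case True then show ?thesis using x reach_refl by simp
      next
        case False then show ?thesis using \<open>x < n\<close> reach1[OF CK_graph] by (simp add: CK_adj)
      qed
    next
      case xn: False
      then have "adj (CK n) x (x - n)" using x by (auto simp: CK_adj CK_verts)
      show ?thesis
      proof (cases "x - n = 0")
        case True then show ?thesis using reach1[OF CK_graph] \<open>adj (CK n) x (x - n)\<close> by simp
      next
        case False
        then have "adj (CK n) (x - n) 0" using x xn by (auto simp: CK_adj CK_verts)
        then show ?thesis using reach2[OF CK_graph] \<open>adj (CK n) x (x - n)\<close> by blast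
      qed
    qed
  qed
qed

lemma CK_bad: assumes "2 \<le> n" shows "n \<le> card (bad_verts (CK n))"
proof (rule bad_card[OF CK_graph, of "{0..<n}"])
  show "{0..<n} \<subseteq> bad_verts (CK n)"
  proof
    fix i assume i: "i \<in> {0..<n}"
    define j where "j = (if i = 0 then 1 else 0::nat)"
    have j: "j < n" "j \<noteq> i" using assms by (auto simp: j_def)
    show "i \<in> bad_verts (CK n)"
      by (rule bad_I2[OF CK_graph, where v = i and x = "i+n" and y = j]) (use i j in \<open>auto simp: CK_adj\<close>)
  qed
qed simp

lemma K1nstar_adj: "adj (K1nstar n) u v = ((u = 0 \<and> 1 \<le> v \<and> v \<le> n) \<or> (v = 0 \<and> 1 \<le> u \<and> u \<le> n)
      \<or> (1 \<le> u \<and> u \<le> n \<and> v = u + n) \<or> (1 \<le> v \<and> v \<le> n \<and> u = v + n))"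
  by (simp add: K1nstar_def adj_def)
lemma K1nstar_verts: "verts (K1nstar n) = {0..2*n}" by (simp add: K1nstar_def verts_def)

lemma K1nstar_graph: "is_graph (K1nstar n)"
  unfolding is_graph_def K1nstar_adj K1nstar_verts by auto

lemma K1nstar_conn: "connected_graph (K1nstar n)"
proof (rule conn_hub[OF K1nstar_graph, of 0])
  show "0 \<in> verts (K1nstar n)" by (simp add: K1nstar_verts)
  fix x assume x: "x \<in> verts (K1nstar n)"
  show "reach_in (K1nstar n) (verts (K1nstar n)) x 0"
  proof (cases "x = 0")
    case True then show ?thesis using x reach_refl by simp
  next
    case x0: False
    show ?thesis
    proof (cases "x \<le> n")
      case True then show ?thesis using x0 reach1[OF K1nstar_graph] by (simp add: K1nstar_adj)
    next
      case False
      then have "adj (K1nstar n) x (x - n)" "adj (K1nstar n) (x - n) 0"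
        using x by (auto simp: K1nstar_adj K1nstar_verts)
      then show ?thesis using reach2[OF K1nstar_graph] by blast
    qed
  qed
qed

lemma K1nstar_bad: shows "n \<le> card (bad_verts (K1nstar n))"
proof (rule bad_card[OF K1nstar_graph, of "{1..n}"])
  show "{1..n} \<subseteq> bad_verts (K1nstar n)"
  proof
    fix i assume i: "i \<in> {1..n}"
    show "i \<in> bad_verts (K1nstar n)"
      by (rule bad_I2[OF K1nstar_graph, where v = i and x = "i+n" and y = 0])
         (use i in \<open>auto simp: K1nstar_adj\<close>)
  qed
qed simp

lemma Path_adj: "adj (Path n) u v = (u < n \<and> v < n \<and> (v = u + 1 \<or> u = v + 1))"
  by (simp add: Path_def adj_def)
lemma Path_verts: "verts (Path n) = {0..<n}" by (simp add: Path_def verts_def)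

lemma Path_graph: "is_graph (Path n)"
  unfolding is_graph_def Path_adj Path_verts by auto

lemma Path_conn: "connected_graph (Path n)"
proof (cases "n = 0")
  case True then show ?thesis by (simp add: connected_graph_def Path_verts)
next
  case False
  show ?thesis
  proof (rule conn_hub[OF Path_graph, of 0])
    show "0 \<in> verts (Path n)" using False by (simp add: Path_verts)
    fix x assume x: "x \<in> verts (Path n)"
    then have "x < n" by (simp add: Path_verts)
    then show "reach_in (Path n) (verts (Path n)) x 0"
    proof (induction x)
      case 0 then show ?case using reach_refl by (simp add: Path_verts)
    next
      case (Suc x)
      then have "adj (Path n) (Suc x) x" by (simp add: Path_adj)
      then have "reach_in (Path n) (verts (Path n)) (Suc x) x" using reach1[OF Path_graph] by blast
      moreover have "reach_in (Path n) (verts (Path n)) x 0" using Suc by simp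
      ultimately show ?case using reach_trans by blast
    qed
  qed
qed

lemma Path_bad: shows "n - 2 \<le> card (bad_verts (Path n))"
proof (rule bad_card[OF Path_graph, of "{1..<n-1}"])
  show "{1..<n-1} \<subseteq> bad_verts (Path n)"
  proof
    fix i assume i: "i \<in> {1..<n-1}"
    show "i \<in> bad_verts (Path n)"
    proof (rule bad_I2[OF Path_graph, where v = i and x = "i-1" and y = "i+1"])
      have i': "1 \<le> i" "i + 1 < n" using i by auto
      show "adj (Path n) i (i-1)" "adj (Path n) i (i+1)" "i - 1 \<noteq> i + 1" using i' by (auto simp: Path_adj)
      fix b assume "adj (Path n) i b"
      then have "b = i + 1 \<or> i = b + 1" by (simp add: Path_adj)
      then show "\<not> adj (Path n) (i-1) b" unfolding Path_adj using i' by presburger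
    qed
  qed
qed simp

lemma K2n_adj: "adj (K2n n) u v = ((u < 2 \<and> 2 \<le> v \<and> v < n + 2) \<or> (v < 2 \<and> 2 \<le> u \<and> u < n + 2))"
  by (simp add: K2n_def adj_def)
lemma K2n_verts: "verts (K2n n) = {0..<n+2}" by (simp add: K2n_def verts_def)

lemma K2n_graph: "is_graph (K2n n)"
  unfolding is_graph_def K2n_adj K2n_verts by auto

lemma K2n_conn: assumes "1 \<le> n" shows "connected_graph (K2n n)"
proof (rule conn_hub[OF K2n_graph, of 0])
  show "0 \<in> verts (K2n n)" by (simp add: K2n_verts)
  fix x assume x: "x \<in> verts (K2n n)"
  show "reach_in (K2n n) (verts (K2n n)) x 0"
  proof (cases "x = 0")
    case True then show ?thesis using x reach_refl by simp
  next
    case x0: False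
    show ?thesis
    proof (cases "x = 1")
      case True
      have "adj (K2n n) x 2" "adj (K2n n) 2 0" using True assms by (auto simp: K2n_adj)
      then show ?thesis using reach2[OF K2n_graph] by blast
    next
      case False
      then have "adj (K2n n) x 0" using x x0 by (auto simp: K2n_adj K2n_verts)
      then show ?thesis using reach1[OF K2n_graph] by blast
    qed
  qed
qed

lemma K2n_bad: shows "n \<le> card (bad_verts (K2n n))"
proof (rule bad_card[OF K2n_graph, of "{2..<n+2}"])
  show "{2..<n+2} \<subseteq> bad_verts (K2n n)"
  proof
    fix i assume i: "i \<in> {2..<n+2}"
    show "i \<in> bad_verts (K2n n)"
      by (rule bad_I2[OF K2n_graph, where v = i and x = 0 and y = 1])
         (use i in \<open>auto simp: K2n_adj\<close>)
  qed
qed simp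

lemma Tgraph_adj: "adj (Tgraph n) u v = ((u < n \<and> v < n \<and> u \<noteq> v)
      \<or> (u < n \<and> n \<le> v \<and> v < 2*n) \<or> (v < n \<and> n \<le> u \<and> u < 2*n)
      \<or> (u = 2*n \<and> n \<le> v \<and> v < 2*n) \<or> (v = 2*n \<and> n \<le> u \<and> u < 2*n))"
  by (simp add: Tgraph_def adj_def)
lemma Tgraph_verts: "verts (Tgraph n) = {0..2*n}" by (simp add: Tgraph_def verts_def)

lemma Tgraph_graph: "is_graph (Tgraph n)"
  unfolding is_graph_def Tgraph_adj Tgraph_verts by auto

lemma Tgraph_conn: assumes "1 \<le> n" shows "connected_graph (Tgraph n)"
proof (rule conn_hub[OF Tgraph_graph, of n])
  show "n \<in> verts (Tgraph n)" by (simp add: Tgraph_verts)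
  fix x assume x: "x \<in> verts (Tgraph n)"
  show "reach_in (Tgraph n) (verts (Tgraph n)) x n"
  proof (cases "x = n")
    case True then show ?thesis using x reach_refl by simp
  next
    case xn: False
    show ?thesis
    proof (cases "x < n \<or> x = 2*n")
      case True
      then have "adj (Tgraph n) x n" using assms by (auto simp: Tgraph_adj)
      then show ?thesis using reach1[OF Tgraph_graph] by blast
    next
      case False
      then have "adj (Tgraph n) x 0" "adj (Tgraph n) 0 n" using x xn assms
        by (auto simp: Tgraph_adj Tgraph_verts)
      then show ?thesis using reach2[OF Tgraph_graph] by blast
    qed
  qed
qed

lemma Tgraph_bad: shows "n \<le> card (bad_verts (Tgraph n))"
proof (rule bad_card[OF Tgraph_graph, of "{n..<2*n}"])
  show "{n..<2*n} \<subseteq> bad_verts (Tgraph n)"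
  proof
    fix i assume i: "i \<in> {n..<2*n}"
    show "i \<in> bad_verts (Tgraph n)"
      by (rule bad_I2[OF Tgraph_graph, where v = i and x = "2*n" and y = 0])
         (use i in \<open>auto simp: Tgraph_adj\<close>)
  qed
qed simp

lemma main_bound:
  assumes n0: "0 < n"
  shows "\<exists>C::nat. \<forall>G. is_graph G \<longrightarrow> connected_graph G \<longrightarrow> Ffree n G \<longrightarrow> card (bad_verts G) < C"
proof -
  obtain R :: nat where R: "\<forall>G q. is_graph G \<longrightarrow> Ffree n G \<longrightarrow> (\<forall>i<R. q i \<in> bad_verts G)
     \<longrightarrow> (\<forall>i<R. \<forall>j<R. adj G (q i) (q j) = (i \<noteq> j)) \<longrightarrow> False"
    using lemmaA[of n] by blast
  obtain M1 :: nat where M1: "\<forall>G u w. is_graph G \<longrightarrow> Ffree n G \<longrightarrow> (\<forall>i<M1. w i \<in> bad_verts G)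
     \<longrightarrow> (\<forall>i<M1. \<forall>j<M1. \<not> adj G (w i) (w j)) \<longrightarrow> inj_on w {..<M1}
     \<longrightarrow> (\<forall>i<M1. adj G u (w i)) \<longrightarrow> False"
    using lemmaC[of n] by blast
  have "\<forall>d. \<exists>N::nat. \<forall>G r s. is_graph G \<longrightarrow> Ffree n G \<longrightarrow> r \<in> verts G
     \<longrightarrow> (\<forall>i<N. s i \<in> lay G r d) \<longrightarrow> inj_on s {..<N}
     \<longrightarrow> (\<forall>i<N. \<forall>j<N. \<not> adj G (s i) (s j))
     \<longrightarrow> (\<forall>w. card {i. i < N \<and> adj G w (s i)} < M1) \<longrightarrow> False"
    using lemmaD[of n] by blast
  then have "\<exists>Nd::nat\<Rightarrow>nat. \<forall>d. \<forall>G r s. is_graph G \<longrightarrow> Ffree n G \<longrightarrow> r \<in> verts G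
     \<longrightarrow> (\<forall>i<Nd d. s i \<in> lay G r d) \<longrightarrow> inj_on s {..<Nd d}
     \<longrightarrow> (\<forall>i<Nd d. \<forall>j<Nd d. \<not> adj G (s i) (s j))
     \<longrightarrow> (\<forall>w. card {i. i < Nd d \<and> adj G w (s i)} < M1) \<longrightarrow> False"
    by (rule choice)
  then obtain Nd :: "nat \<Rightarrow> nat" where Nd: "\<forall>d. \<forall>G r s. is_graph G \<longrightarrow> Ffree n G \<longrightarrow> r \<in> verts G
     \<longrightarrow> (\<forall>i<Nd d. s i \<in> lay G r d) \<longrightarrow> inj_on s {..<Nd d}
     \<longrightarrow> (\<forall>i<Nd d. \<forall>j<Nd d. \<not> adj G (s i) (s j))
     \<longrightarrow> (\<forall>w. card {i. i < Nd d \<and> adj G w (s i)} < M1) \<longrightarrow> False"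
    by blast
  define ND where "ND = (\<Sum>d<n. Nd d)"
  have NdND: "Nd d \<le> ND" if "d < n" for d
    unfolding ND_def using that by (intro member_le_sum) auto
  obtain L where L: "\<forall>f::nat\<Rightarrow>nat\<Rightarrow>nat. (\<forall>i j. i<j \<longrightarrow> j<L \<longrightarrow> f i j < n) \<longrightarrow>
     (\<exists>h c. (\<forall>i<ND+2. h i < L) \<and> (\<forall>i j. i<j \<longrightarrow> j<ND+2 \<longrightarrow> h i < h j)
        \<and> (\<forall>i j. i<j \<longrightarrow> j<ND+2 \<longrightarrow> f (h i) (h j) = c))"
    using ramsey_seq[of n "ND+2"] n0 by auto
  define K where "K = R + L"
  obtain C where C: "\<forall>f::nat\<Rightarrow>nat\<Rightarrow>nat. (\<forall>i j. i<j \<longrightarrow> j<C \<longrightarrow> f i j < 2) \<longrightarrow>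
     (\<exists>h c. (\<forall>i<K. h i < C) \<and> (\<forall>i j. i<j \<longrightarrow> j<K \<longrightarrow> h i < h j)
        \<and> (\<forall>i j. i<j \<longrightarrow> j<K \<longrightarrow> f (h i) (h j) = c))"
    using ramsey_seq[of 2 K] by auto
  show ?thesis
  proof (rule exI[of _ C], intro allI impI)
    fix G assume g: "is_graph G" and conn: "connected_graph G" and F: "Ffree n G"
    have sym: "adj G a b = adj G b a" for a b using gE(2)[OF g] by blast
    show "card (bad_verts G) < C"
    proof (rule ccontr)
      assume "\<not> card (bad_verts G) < C"
      then have cC: "C \<le> card (bad_verts G)" by simp
      have finB: "finite (bad_verts G)" using gE(1)[OF g] by (simp add: bad_verts_def)
      obtain v where vinj: "inj_on v {..<C}" and vb: "v ` {..<C} \<subseteq> bad_verts G"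
        using extract_idx[OF finB cC] by blast
      define f where "f a b = (if adj G (v a) (v b) then 1 else (0::nat))" for a b
      have f2: "\<forall>i j. i<j \<longrightarrow> j<C \<longrightarrow> f i j < 2" by (simp add: f_def)
      obtain h col where hC: "\<forall>i<K. h i < C" and hm: "\<forall>i j. i<j \<longrightarrow> j<K \<longrightarrow> h i < h j"
        and hc: "\<forall>i j. i<j \<longrightarrow> j<K \<longrightarrow> f (h i) (h j) = col"
        using mp[OF spec[OF C, of f] f2] by (elim exE conjE)
      have vhinj: "inj_on (\<lambda>i. v (h i)) {..<K}" by (rule inj_comp_strict[OF vinj hC hm])
      have vhb: "v (h i) \<in> bad_verts G" if "i < K" for i using vb hC that by auto
      have VVh: "\<forall>i j. i<j \<longrightarrow> j<K \<longrightarrow> adj G (v (h i)) (v (h j)) = (col = 1)"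
      proof (intro allI impI)
        fix i j assume ij: "i < j" "j < K"
        then have "f (h i) (h j) = col" using hc by blast
        then show "adj G (v (h i)) (v (h j)) = (col = 1)" by (auto simp: f_def split: if_splits)
      qed
      have VV: "\<forall>i<K. \<forall>j<K. adj G (v (h i)) (v (h j)) = (col = 1 \<and> i \<noteq> j)"
        using hom_sym[OF g, of K "\<lambda>i. v (h i)" "col = 1"] VVh by blast
      show False
      proof (cases "col = 1")
        case True
        have X: "\<And>i. i<R \<Longrightarrow> v (h i) \<in> bad_verts G" using vhb by (simp add: K_def)
        have Y: "\<And>i j. i<R \<Longrightarrow> j<R \<Longrightarrow> adj G (v (h i)) (v (h j)) = (i \<noteq> j)"
          using VV True by (simp add: K_def)
        show False using R[rule_format, OF g F X Y] .
      next
        case False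
        define I where "I i = v (h i)" for i
        have II: "\<forall>i<K. \<forall>j<K. \<not> adj G (I i) (I j)" using VV False by (simp add: I_def)
        have Ib: "\<And>i. i < K \<Longrightarrow> I i \<in> bad_verts G" using vhb by (simp add: I_def)
        have Iv: "\<And>i. i < K \<Longrightarrow> I i \<in> verts G" using Ib by (simp add: bad_verts_def)
        have K0: "0 < K" using K_def n0 False
        proof -
          have "L \<ge> 2"
          proof (rule ccontr)
            assume "\<not> L \<ge> 2"
            obtain hh cc where "\<forall>i<ND+2. hh i < L" "\<forall>i j. i<j \<longrightarrow> j<ND+2 \<longrightarrow> hh i < hh j"
              using mp[OF spec[OF L, of "\<lambda>a b. 0"] ] n0 by auto
            then have "hh 0 < hh 1" "hh 1 < L" by auto
            then show False using \<open>\<not> L \<ge> 2\<close> by simp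
          qed
          then show "0 < K" by (simp add: K_def)
        qed
        define r where "r = I 0"
        have r: "r \<in> verts G" using Iv K0 by (simp add: r_def)
        define lv where "lv i = (SOME k. I i \<in> lay G r k)" for i
        have lv: "I i \<in> lay G r (lv i)" if "i < K" for i
          unfolding lv_def using lay_cover[OF g conn r Iv[OF that]] by (rule someI_ex)
        have lvn: "lv i < n" if "i < K" for i
        proof (rule ccontr)
          assume "\<not> lv i < n"
          then have "n \<le> Suc (lv i)" by simp
          then have "induced_sub (Path n) G" using lay_Path[OF g r lv[OF that]] by blast
          then show False using F by (simp add: Ffree_def)
        qed
        have LK: "L \<le> K" by (simp add: K_def)
        define f2 where "f2 a b = lv a" for a b :: nat
        have f2n: "\<forall>i j. i<j \<longrightarrow> j<L \<longrightarrow> f2 i j < n" using lvn LK by (auto simp: f2_def)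
        obtain h2 col2 where h2L: "\<forall>i<ND+2. h2 i < L" and h2m: "\<forall>i j. i<j \<longrightarrow> j<ND+2 \<longrightarrow> h2 i < h2 j"
          and h2c: "\<forall>i j. i<j \<longrightarrow> j<ND+2 \<longrightarrow> f2 (h2 i) (h2 j) = col2"
          using mp[OF spec[OF L, of f2] f2n] by (elim exE conjE)
        define s where "s i = I (h2 i)" for i
        have h2K: "h2 i < K" if "i < ND + 2" for i using h2L LK that by auto
        have slv: "lv (h2 i) = col2" if "i < ND + 1" for i
          using h2c[rule_format, of i "ND+1"] that by (simp add: f2_def)
        have col2n: "col2 < n" using slv[of 0] lvn[OF h2K[of 0]] by simp
        have sl: "s i \<in> lay G r col2" if "i < ND + 1" for i
          using lv[OF h2K[of i]] slv[OF that] that by (simp add: s_def)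
        have sinj: "inj_on s {..<ND+2}"
          unfolding s_def I_def
          by (rule inj_comp_strict[OF vhinj _ h2m]) (use h2K in auto)
        have ss: "\<not> adj G (s i) (s j)" if "i < ND+2" "j < ND+2" for i j
          using II h2K that by (simp add: s_def)
        have sb: "s i \<in> bad_verts G" if "i < ND+2" for i using Ib h2K that by (simp add: s_def)
        have deg: "card {i. i < ND \<and> adj G w (s i)} < M1" for w
        proof (rule ccontr)
          assume "\<not> card {i. i < ND \<and> adj G w (s i)} < M1"
          then have "M1 \<le> card {i. i < ND \<and> adj G w (s i)}" by simp
          then obtain t where t: "inj_on t {..<M1}" "t ` {..<M1} \<subseteq> {i. i < ND \<and> adj G w (s i)}"
            using extract_idx[of "{i. i < ND \<and> adj G w (s i)}" M1] by auto
          have tt: "t i < ND" "adj G w (s (t i))" if "i < M1" for i using t(2) that by auto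
          show False
          proof (rule M1[rule_format, OF g F, where u = w and w = "\<lambda>i. s (t i)"])
            have t2: "t i < ND + 2" if "i < M1" for i using tt(1)[OF that] by simp
            show "\<And>i. i < M1 \<Longrightarrow> s (t i) \<in> bad_verts G" using sb t2 by blast
            show "\<And>i j. i < M1 \<Longrightarrow> j < M1 \<Longrightarrow> \<not> adj G (s (t i)) (s (t j))" using ss t2 by blast
            show "inj_on (\<lambda>i. s (t i)) {..<M1}"
            proof (rule inj_onI)
              fix a b assume ab: "a \<in> {..<M1}" "b \<in> {..<M1}" "s (t a) = s (t b)"
              then have "t a < ND + 2" "t b < ND + 2" using t2 by auto
              then have "t a = t b" using inj_onD[OF sinj] ab(3) by auto
              then show "a = b" using inj_onD[OF t(1)] ab by auto
            qed
            show "\<And>i. i < M1 \<Longrightarrow> adj G w (s (t i))" using tt by simp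
          qed
        qed
        have NdN: "Nd col2 \<le> ND" using NdND col2n by simp
        show False
        proof (rule Nd[rule_format, OF g F r, where d = col2 and s = s])
          show "\<And>i. i < Nd col2 \<Longrightarrow> s i \<in> lay G r col2" using sl NdN by simp
          show "inj_on s {..<Nd col2}" by (rule inj_on_subset[OF sinj]) (use NdN in auto)
          show "\<And>i j. i < Nd col2 \<Longrightarrow> j < Nd col2 \<Longrightarrow> \<not> adj G (s i) (s j)" using ss NdN by simp
          show "\<And>w. card {i. i < Nd col2 \<and> adj G w (s i)} < M1"
          proof -
            fix w
            have "card {i. i < Nd col2 \<and> adj G w (s i)} \<le> card {i. i < ND \<and> adj G w (s i)}"
              using NdN by (intro card_mono) auto
            then show "card {i. i < Nd col2 \<and> adj G w (s i)} < M1" using deg[of w] by simp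
          qed
        qed
      qed
    qed
  qed
qed

lemma Ffree_of:
  assumes fam: "family_le \<H> {Kstar n, K1nstar n, Path n, K2n n, CK n, Tgraph n}"
    and hf: "H_free \<H> G"
  shows "Ffree n G"
proof -
  have "\<not> induced_sub X G" if "X \<in> {Kstar n, K1nstar n, Path n, K2n n, CK n, Tgraph n}" for X
  proof
    assume XG: "induced_sub X G"
    have "\<exists>H\<in>\<H>. induced_sub H X" using fam that unfolding family_le_def by blast
    then obtain H where "H \<in> \<H>" "induced_sub H X" by blast
    then have "induced_sub H G" using XG prec_trans by blast
    then show False using hf \<open>H \<in> \<H>\<close> unfolding H_free_def by blast
  qed
  then show ?thesis by (simp add: Ffree_def)
qed

theorem theorem1p6:
  fixes \<H> :: "graph set"
  assumes "\<forall>H\<in>\<H>. is_graph H"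
  shows "(\<exists>c::nat. \<forall>G. is_graph G \<and> connected_graph G \<and> H_free \<H> G
              \<longrightarrow> card (bad_verts G) < c)
     \<longleftrightarrow> (\<exists>n::nat. n > 0 \<and>
              family_le \<H> {Kstar n, K1nstar n, Path n, K2n n, CK n, Tgraph n})"
proof
  assume "\<exists>c::nat. \<forall>G. is_graph G \<and> connected_graph G \<and> H_free \<H> G \<longrightarrow> card (bad_verts G) < c"
  then obtain c :: nat where c: "\<And>G. is_graph G \<Longrightarrow> connected_graph G \<Longrightarrow> H_free \<H> G \<Longrightarrow> card (bad_verts G) < c"
    by blast
  show "\<exists>n::nat. n > 0 \<and> family_le \<H> {Kstar n, K1nstar n, Path n, K2n n, CK n, Tgraph n}"
  proof (rule ccontr)
    assume nf: "\<not> ?thesis"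
    define n where "n = c + 3"
    have "\<not> (n > 0 \<and> family_le \<H> {Kstar n, K1nstar n, Path n, K2n n, CK n, Tgraph n})"
      using nf by blast
    then have "\<not> family_le \<H> {Kstar n, K1nstar n, Path n, K2n n, CK n, Tgraph n}"
      by (simp add: n_def)
    then obtain X where X: "X \<in> {Kstar n, K1nstar n, Path n, K2n n, CK n, Tgraph n}"
      and Xf: "\<forall>H\<in>\<H>. \<not> induced_sub H X" unfolding family_le_def by blast
    have hf: "H_free \<H> X" using Xf by (simp add: H_free_def)
    have n2: "2 \<le> n" "1 \<le> n" by (auto simp: n_def)
    have "is_graph X \<and> connected_graph X \<and> c \<le> card (bad_verts X)"
      using X
    proof (elim insertE emptyE)
      assume "X = Kstar n" then show ?thesis
        using Kstar_graph Kstar_conn Kstar_bad[OF n2(1)] by (simp add: n_def)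
    next
      assume "X = K1nstar n" then show ?thesis
        using K1nstar_graph K1nstar_conn K1nstar_bad[of n] by (simp add: n_def)
    next
      assume "X = Path n" then show ?thesis
        using Path_graph Path_conn Path_bad[of n] by (simp add: n_def)
    next
      assume "X = K2n n" then show ?thesis
        using K2n_graph K2n_conn[OF n2(2)] K2n_bad[of n] by (simp add: n_def)
    next
      assume "X = CK n" then show ?thesis
        using CK_graph CK_conn CK_bad[OF n2(1)] by (simp add: n_def)
    next
      assume "X = Tgraph n" then show ?thesis
        using Tgraph_graph Tgraph_conn[OF n2(2)] Tgraph_bad[of n] by (simp add: n_def)
    qed
    then show False using c hf by fastforce
  qed
next
  assume "\<exists>n::nat. n > 0 \<and> family_le \<H> {Kstar n, K1nstar n, Path n, K2n n, CK n, Tgraph n}"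
  then obtain n :: nat where n0: "0 < n" and fam: "family_le \<H> {Kstar n, K1nstar n, Path n, K2n n, CK n, Tgraph n}"
    by blast
  obtain C :: nat where C: "\<forall>G. is_graph G \<longrightarrow> connected_graph G \<longrightarrow> Ffree n G \<longrightarrow> card (bad_verts G) < C"
    using main_bound[OF n0] by blast
  show "\<exists>c::nat. \<forall>G. is_graph G \<and> connected_graph G \<and> H_free \<H> G \<longrightarrow> card (bad_verts G) < c"
    using C Ffree_of[OF fam] by blast
qed


end
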